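(* Let $f:\mathcal{D}\to\mathbb{R}$ be real-analytic and $\tau(f)$-strongly convex on the open set $\mathcal{D}\subseteq\mathbb{R}^n$, satisfying the holomorphic extension assumption for some $\bar\delta\in(0,1)$, and let $\mathcal{K}\subset\mathcal{D}$ be compact and convex. Suppose $f$ has Lipschitz Hessian on $\mathcal{K}$ with a nonzero constant $L_2(f)$. Let $\{x_k\}_{k\ge1}$ be generated by Algorithm (b) (projected, onto $\mathcal{K}$, with $x_1\in\mathcal{K}$) with stepsizes $\mu_k=2/(\tau(f)k)$ and smoothing parameters $\delta_k=\delta k^{-1/6}$, where $\delta\in(0,\kappa\bar\delta]$ for some $\kappa\in(0,1)$, and suppose the oracle is the stochastic complex oracle with noise second moment bound $\sigma_\xi$ and independent noise. Let $x^\star$ be the minimizer of $f$ over $\mathcal{K}$ and $\bar x_K=K^{-1}\sum_{k=1}^K x_k$. Then $$\mathbb{E}[f(\bar x_K)-f(x^\star)]\le\widetilde O\!\left(\frac{n^2}{\tau(f)}\,\delta^{-1/3}\sigma_\xi\,K^{-2/3}\right),$$ where $\widetilde O$ hides factors polylogarithmic in $K$ and constants independent of $K$.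
   Context: Standing setup. $\mathcal{D}\subseteq\mathbb{R}^n$ open, $f:\mathcal{D}\to\mathbb{R}$ real-analytic. Holomorphic extension assumption: $f$ admits a holomorphic extension to $\{x+iy: x\in\mathcal{D}, y\in(-\bar\delta,\bar\delta)^n\}\subset\mathbb{C}^n$ for some $\bar\delta\in(0,1)$. Stochastic complex oracle: on query $z$ in that set it returns $\Im(f(z))+\xi$, where $\xi$ is a real random variable with $\mathbb{E}[\xi]=0$, $\mathbb{E}[\xi^2]\le\sigma_\xi$ ($\sigma_\xi>0$); the noise is drawn independently of the random directions $u_k$ (fresh noise at each query). Algorithm 1: given $x_1\in\mathcal{X}$, stepsizes $\{\mu_k\}$ and smoothing parameters $\{\delta_k\}$, for $k=1,\dots,K$: draw $u_k$ uniformly on $\mathbb{S}^{n-1}$ (independently), set $g_{\delta_k}(x_k)=\frac{n}{\delta_k}\Im(f(x_k+i\delta_ku_k))u_k+\frac{n}{\delta_k}\xi_ku_k$ (the oracle output times $\frac{n}{\delta_k}u_k$), and $x_{k+1}=\Pi_{\mathcal{X}}(x_k-\mu_kg_{\delta_k}(x_k))$. Variant (a): $\mathcal{X}=\mathcal{D}$ (no projection); variant (b): $\mathcal{X}=\mathcal{K}\subset\mathcal{D}$ with $\Pi_{\mathcal{K}}$ the Euclidean projection onto $\mathcal{K}$. $f$ is $\tau(f)$-strongly convex if $f(y)\ge f(x)+\langle\nabla f(x),y-x\rangle+\tfrac12\tau(f)\|y-x\|_2^2$ for all $x,y\in\mathcal{D}$. Lipschitz Hessian with constant $L_2(f)$: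 $\|\nabla^2f(x)-\nabla^2f(y)\|_2\le L_2(f)\|x-y\|_2$. Expectations are over all randomness (directions and noise). *)

theory Defs
  imports "HOL-Probability.Probability"
begin

definition cvec :: "real^'n \<Rightarrow> real^'n \<Rightarrow> complex^'n" where
  "cvec x y = (\<chi> j. Complex (x $ j) (y $ j))"

text \<open>Holomorphy of a function of several complex variables on a set S:
  complex (Frechet) differentiability, i.e. the real derivative exists and is
  complex-linear (commutes with multiplication by the imaginary unit).\<close>
definition holomorphic_vec_on :: "(complex^'n \<Rightarrow> complex) \<Rightarrow> (complex^'n) set \<Rightarrow> bool" where
  "holomorphic_vec_on F S \<longleftrightarrow>
     (\<forall>z\<in>S. \<exists>F'. (F has_derivative F') (at z) \<and>
                  (\<forall>v. F' (\<chi> j. \<i> * v $ j) = \<i> * F' v))"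

definition strip :: "(real^'n) set \<Rightarrow> real \<Rightarrow> (complex^'n) set" where
  "strip D d = {cvec x y | x y. x \<in> D \<and> (\<forall>j. \<bar>y $ j\<bar> < d)}"

text \<open>Real-analyticity in several variables: locally given by an (absolutely,
  i.e. unconditionally) convergent multivariate power series.\<close>
definition real_analytic_vec_on :: "(real^'n \<Rightarrow> real) \<Rightarrow> (real^'n) set \<Rightarrow> bool" where
  "real_analytic_vec_on f D \<longleftrightarrow>
     (\<forall>x\<in>D. \<exists>r>0. \<exists>c :: ('n \<Rightarrow> nat) \<Rightarrow> real.
        \<forall>y\<in>ball x r. ((\<lambda>\<alpha>. c \<alpha> * (\<Prod>j\<in>UNIV. (y $ j - x $ j) ^ \<alpha> j)) has_sum f y) UNIV)"

definition grad :: "(real^'n \<Rightarrow> real) \<Rightarrow> real^'n \<Rightarrow> real^'n" where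
  "grad f x = (\<chi> i. frechet_derivative f (at x) (axis i 1))"

definition hessian :: "(real^'n \<Rightarrow> real) \<Rightarrow> real^'n \<Rightarrow> real^'n^'n" where
  "hessian f x = (\<chi> i j. frechet_derivative (\<lambda>y. grad f y $ i) (at x) (axis j 1))"

definition mat_norm2 :: "real^'n^'m \<Rightarrow> real" where
  "mat_norm2 A = onorm (\<lambda>v. A *v v)"

definition strongly_convex_on :: "(real^'n) set \<Rightarrow> real \<Rightarrow> (real^'n \<Rightarrow> real) \<Rightarrow> bool" where
  "strongly_convex_on D tau f \<longleftrightarrow> (\<forall>x\<in>D. \<forall>y\<in>D.
      f y \<ge> f x + grad f x \<bullet> (y - x) + tau / 2 * (norm (y - x))\<^sup>2)"

text \<open>Uniform distribution on the unit sphere S^{n-1}: the normalized cone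
  measure, i.e. the radial projection of the uniform distribution on the unit ball.\<close>
definition uniform_sphere :: "(real^'n) measure" where
  "uniform_sphere = distr (uniform_measure lborel (ball 0 1)) borel (\<lambda>x. x /\<^sub>R norm x)"

end

theory Submission imports Defs "HOL-Complex_Analysis.Complex_Analysis" begin

no_notation fps_nth (infixl "$" 75)



lemma Basis_cart_range: "(Basis :: (real^'n) set) = range (\<lambda>i. axis i 1)"
  by (auto simp: Basis_vec_def)

lemma prod_Basis_cart: "(\<Prod>b\<in>(Basis :: (real^'n) set). h b) = (\<Prod>i\<in>UNIV. h (axis i 1))"
proof -
  have "inj (\<lambda>i::'n. axis i (1::real))" by (auto simp: inj_on_def axis_eq_axis)
  then show ?thesis unfolding Basis_cart_range by (simp add: prod.reindex)
qed

lemma flip_iff: "s = 1 \<or> s = -1 \<Longrightarrow> ((a::real) < s*x \<and> s*x < b) \<longleftrightarrow>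
   ((if s=1 then a else -b) < x \<and> x < (if s = 1 then b else -a))"
  by auto

lemma lborel_perm_flip:
  fixes p :: "'n::finite \<Rightarrow> 'n" and s :: "'n \<Rightarrow> real"
  assumes p: "bij p" and s: "\<And>k. s k = 1 \<or> s k = -1"
  shows "distr lborel borel (\<lambda>x::real^'n. \<chi> k. s k * x $ p k) = lborel"
proof -
  define T where "T = (\<lambda>x::real^'n. \<chi> k. s k * x $ p k)"
  define q where "q = inv p"
  have pq: "p (q j) = j" for j using p by (simp add: q_def bij_is_surj surj_f_inv_f)
  have qp: "q (p j) = j" for j using p by (simp add: q_def bij_is_inj inv_f_f)
  have Tm: "T \<in> borel_measurable borel"
    unfolding T_def by (intro borel_measurable_continuous_onI linear_continuous_on)
      (auto intro!: bounded_linearI' simp: vec_eq_iff algebra_simps)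
  show ?thesis unfolding T_def[symmetric]
  proof (rule lborel_eqI[symmetric])
    fix l u :: "real^'n"
    assume le: "\<And>b. b \<in> Basis \<Longrightarrow> l \<bullet> b \<le> u \<bullet> b"
    have le': "l $ i \<le> u $ i" for i using le[of "axis i 1"] by (simp add: inner_axis axis_in_Basis_iff)
    define l' :: "real^'n" where "l' = (\<chi> j. if s (q j) = 1 then l $ q j else - u $ q j)"
    define u' :: "real^'n" where "u' = (\<chi> j. if s (q j) = 1 then u $ q j else - l $ q j)"
    have pre: "T -` box l u = box l' u'"
    proof (rule set_eqI)
      fix x :: "real^'n"
      have "x \<in> T -` box l u \<longleftrightarrow> (\<forall>k. l $ k < s k * x $ p k \<and> s k * x $ p k < u $ k)"
        by (simp add: T_def mem_box_cart)
      also have "\<dots> \<longleftrightarrow> (\<forall>j. l $ q j < s (q j) * x $ j \<and> s (q j) * x $ j < u $ q j)"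
        by (metis pq qp)
      also have "\<dots> \<longleftrightarrow> x \<in> box l' u'"
        unfolding mem_box_cart l'_def u'_def
        using flip_iff s by simp
      finally show "x \<in> T -` box l u \<longleftrightarrow> x \<in> box l' u'" .
    qed
    have le2: "l' $ j \<le> u' $ j" for j using le'[of "q j"] s[of "q j"] by (auto simp: l'_def u'_def)
    have "emeasure (distr lborel borel T) (box l u) = emeasure lborel (T -` box l u)"
      using Tm by (simp add: emeasure_distr)
    also have "\<dots> = emeasure lborel (box l' u')" by (simp add: pre)
    also have "\<dots> = ennreal (\<Prod>j\<in>UNIV. u' $ j - l' $ j)"
    proof -
      have "\<And>b. b \<in> Basis \<Longrightarrow> l' \<bullet> b \<le> u' \<bullet> b"
        using le2 by (auto simp: Basis_cart_range inner_axis)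
      then show ?thesis
        by (simp add: emeasure_lborel_box prod_Basis_cart inner_axis inner_diff_left)
    qed
    also have "(\<Prod>j\<in>UNIV. u' $ j - l' $ j) = (\<Prod>j\<in>UNIV. u $ q j - l $ q j)"
      using s by (intro prod.cong) (auto simp: l'_def u'_def)
    also have "\<dots> = (\<Prod>j\<in>UNIV. u $ j - l $ j)"
    proof -
      have "bij q" using p by (simp add: q_def bij_imp_bij_inv)
      then show ?thesis using prod.reindex_bij_betw[of q UNIV UNIV "\<lambda>j. u $ j - l $ j"]
        by (simp add: o_def)
    qed
    finally show "emeasure (distr lborel borel T) (box l u) = ennreal (prod ((\<bullet>) (u - l)) Basis)"
      by (simp add: prod_Basis_cart inner_axis inner_diff_left)
  qed simp
qed

abbreviation Qball :: "(real^'n) measure" where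
  "Qball \<equiv> uniform_measure lborel (ball 0 1)"

lemma emeasure_ball01_pos: "emeasure lborel (ball (0::real^'n) 1) \<noteq> 0"
proof -
  have "unit_ball_vol (real CARD('n)) \<noteq> 0"
    by (rule not_sym, rule less_imp_neq, rule unit_ball_vol_pos) simp
  then show ?thesis by (simp add: emeasure_ball)
qed

lemma emeasure_ball01_fin: "emeasure lborel (ball (0::real^'n) 1) \<noteq> \<infinity>"
  using emeasure_lborel_ball_finite[of "0::real^'n" 1] by simp

lemma prob_Qball: "prob_space (Qball :: (real^'n) measure)"
  by (rule prob_space_uniform_measure[OF emeasure_ball01_pos emeasure_ball01_fin])

lemma nrm_meas[measurable]: "(\<lambda>x::real^'n. x /\<^sub>R norm x) \<in> borel_measurable borel"
  by measurable

lemma meas_Q: "(f :: real^'n \<Rightarrow> 'b) \<in> borel \<rightarrow>\<^sub>M N \<Longrightarrow> f \<in> (Qball :: (real^'n) measure) \<rightarrow>\<^sub>M N"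
proof -
  have "measurable (Qball :: (real^'n) measure) N = measurable borel N"
    by (rule measurable_cong_sets) auto
  then show "(f :: real^'n \<Rightarrow> 'b) \<in> borel \<rightarrow>\<^sub>M N \<Longrightarrow> f \<in> (Qball :: (real^'n) measure) \<rightarrow>\<^sub>M N" by simp
qed

lemma Qball_meas: "(\<lambda>x::real^'n. x /\<^sub>R norm x) \<in> Qball \<rightarrow>\<^sub>M borel"
  by (rule meas_Q) (rule nrm_meas)

lemma prob_sphere: "prob_space (uniform_sphere :: (real^'n) measure)"
  unfolding uniform_sphere_def
  by (rule prob_space.prob_space_distr[OF prob_Qball Qball_meas])

lemma sets_sphere[simp]: "sets (uniform_sphere :: (real^'n) measure) = sets borel"
  by (simp add: uniform_sphere_def)

lemma space_sphere[simp]: "space (uniform_sphere :: (real^'n) measure) = UNIV"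
  by (simp add: uniform_sphere_def)

lemma measure_sphere_UNIV[simp]: "measure (uniform_sphere :: (real^'n) measure) UNIV = 1"
proof -
  interpret prob_space "uniform_sphere :: (real^'n) measure" by (rule prob_sphere)
  show ?thesis using prob_space by simp
qed

lemma AE_sphere_norm: "AE y in (uniform_sphere :: (real^'n) measure). norm y = 1"
proof -
  have "AE x in (Qball :: (real^'n) measure). x \<noteq> 0"
    by (rule AE_uniform_measureI) (auto intro: AE_mp[OF AE_lborel_singleton[of 0]])
  then have "AE x in (Qball :: (real^'n) measure). norm (x /\<^sub>R norm x) = 1"
    by eventually_elim simp
  then show ?thesis unfolding uniform_sphere_def
    by (subst AE_distr_iff[OF Qball_meas]) auto
qed

lemma integral_sphere:
  fixes \<phi> :: "real^'n \<Rightarrow> real"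
  assumes [measurable]: "\<phi> \<in> borel_measurable borel"
  shows "(\<integral>y. \<phi> y \<partial>uniform_sphere) = (\<integral>x. \<phi> (x /\<^sub>R norm x) \<partial>Qball)"
  unfolding uniform_sphere_def by (rule integral_distr[OF Qball_meas]) simp

lemma distr_Qball_inv:
  fixes T :: "real^'n \<Rightarrow> real^'n"
  assumes Tm[measurable]: "T \<in> borel_measurable borel" and Tn: "\<And>x. norm (T x) = norm x"
    and TD: "distr lborel borel T = lborel"
  shows "distr Qball borel T = Qball"
proof (rule measure_eqI)
  show "sets (distr Qball borel T) = sets Qball" by simp
  fix A assume "A \<in> sets (distr Qball borel T)"
  then have A[measurable]: "A \<in> sets borel" by simp
  have TQ: "T \<in> Qball \<rightarrow>\<^sub>M borel" by (rule meas_Q) (rule Tm)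
  have "emeasure (distr Qball borel T) A = emeasure Qball (T -` A)"
    by (subst emeasure_distr[OF TQ]) auto
  also have "\<dots> = emeasure lborel (ball 0 1 \<inter> T -` A) / emeasure lborel (ball (0::real^'n) 1)"
    using measurable_sets_borel[OF Tm A] by (subst emeasure_uniform_measure) auto
  also have "ball 0 1 \<inter> T -` A = T -` (ball 0 1 \<inter> A)"
    using Tn by auto
  also have "emeasure lborel (T -` (ball 0 1 \<inter> A)) = emeasure (distr lborel borel T) (ball 0 1 \<inter> A)"
    by (subst emeasure_distr) auto
  also have "\<dots> = emeasure lborel (ball 0 1 \<inter> A)" by (simp add: TD)
  also have "emeasure lborel (ball 0 1 \<inter> A) / emeasure lborel (ball (0::real^'n) 1) = emeasure Qball A"
    by (subst emeasure_uniform_measure) auto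
  finally show "emeasure (distr Qball borel T) A = emeasure Qball A" .
qed

lemma integral_sphere_inv:
  fixes T :: "real^'n \<Rightarrow> real^'n" and \<phi> :: "real^'n \<Rightarrow> real"
  assumes Tm[measurable]: "T \<in> borel_measurable borel" and Tn: "\<And>x. norm (T x) = norm x"
    and TD: "distr lborel borel T = lborel" and Tl: "\<And>c x. T (c *\<^sub>R x) = c *\<^sub>R T x"
    and [measurable]: "\<phi> \<in> borel_measurable borel"
  shows "(\<integral>y. \<phi> (T y) \<partial>uniform_sphere) = (\<integral>y. \<phi> y \<partial>uniform_sphere)"
proof -
  have "(\<integral>y. \<phi> (T y) \<partial>uniform_sphere) = (\<integral>x. \<phi> (T (x /\<^sub>R norm x)) \<partial>Qball)"
    by (rule integral_sphere) measurable
  also have "\<dots> = (\<integral>x. \<phi> (T x /\<^sub>R norm (T x)) \<partial>Qball)"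
    by (simp add: Tl Tn)
  also have "\<dots> = (\<integral>x. \<phi> (x /\<^sub>R norm x) \<partial>distr Qball borel T)"
    by (rule integral_distr[symmetric]) (auto intro: meas_Q)
  also have "\<dots> = (\<integral>y. \<phi> y \<partial>uniform_sphere)"
    by (simp add: distr_Qball_inv[OF Tm Tn TD] integral_sphere)
  finally show ?thesis .
qed

lemma meas_S: "(f :: real^'n \<Rightarrow> 'b) \<in> borel \<rightarrow>\<^sub>M N \<Longrightarrow> f \<in> (uniform_sphere :: (real^'n) measure) \<rightarrow>\<^sub>M N"
proof -
  have "measurable (uniform_sphere :: (real^'n) measure) N = measurable borel N"
    by (rule measurable_cong_sets) auto
  then show "(f :: real^'n \<Rightarrow> 'b) \<in> borel \<rightarrow>\<^sub>M N \<Longrightarrow> f \<in> (uniform_sphere :: (real^'n) measure) \<rightarrow>\<^sub>M N" by simp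
qed

lemma integrable_sphere:
  fixes \<phi> :: "real^'n \<Rightarrow> real"
  assumes "\<phi> \<in> borel_measurable borel" "AE y in uniform_sphere. norm (\<phi> y) \<le> B"
  shows "integrable uniform_sphere \<phi>"
  by (rule finite_measure.integrable_const_bound[OF _ assms(2) meas_S[OF assms(1)]])
    (metis prob_space_def prob_sphere)

definition Tps :: "('n \<Rightarrow> 'n) \<Rightarrow> ('n \<Rightarrow> real) \<Rightarrow> real^'n \<Rightarrow> real^'n" where
  "Tps p s x = (\<chi> k. s k * x $ p k)"

lemma Tps_meas[measurable]: "Tps p s \<in> borel_measurable borel"
  unfolding Tps_def by (intro borel_measurable_continuous_onI linear_continuous_on)
      (auto intro!: bounded_linearI' simp: vec_eq_iff algebra_simps)

lemma Tps_scale: "Tps p s (c *\<^sub>R x) = c *\<^sub>R Tps p s x"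
  by (simp add: Tps_def vec_eq_iff)

lemma Tps_norm:
  assumes p: "bij p" and s: "\<And>k. s k = 1 \<or> s k = -1"
  shows "norm (Tps p s x) = norm x"
proof -
  have "Tps p s x \<bullet> Tps p s x = (\<Sum>k\<in>UNIV. (s k * x $ p k) * (s k * x $ p k))"
    by (simp add: Tps_def inner_vec_def)
  also have "\<dots> = (\<Sum>k\<in>UNIV. x $ p k * x $ p k)"
  proof (intro sum.cong refl)
    fix k
    have 1: "s k * s k = 1" using s[of k] by auto
    have "(s k * x $ p k) * (s k * x $ p k) = (s k * s k) * (x $ p k * x $ p k)" by (simp add: algebra_simps)
    then show "(s k * x $ p k) * (s k * x $ p k) = x $ p k * x $ p k" using 1 by simp
  qed
  also have "\<dots> = (\<Sum>k\<in>UNIV. x $ k * x $ k)"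
    using sum.reindex_bij_betw[of p UNIV UNIV "\<lambda>k. x $ k * x $ k"] p by simp
  also have "\<dots> = x \<bullet> x" by (simp add: inner_vec_def)
  finally show ?thesis by (simp add: norm_eq_sqrt_inner)
qed

lemma integral_sphere_Tps:
  fixes \<phi> :: "real^'n \<Rightarrow> real"
  assumes p: "bij p" and s: "\<And>k. s k = 1 \<or> s k = -1" and [measurable]: "\<phi> \<in> borel_measurable borel"
  shows "(\<integral>y. \<phi> (Tps p s y) \<partial>uniform_sphere) = (\<integral>y. \<phi> y \<partial>uniform_sphere)"
  by (rule integral_sphere_inv[OF Tps_meas Tps_norm[OF p s] _ Tps_scale])
    (use lborel_perm_flip[OF p s] in \<open>simp_all add: Tps_def[abs_def]\<close>)

lemma sphere_bound_AE: "AE y in (uniform_sphere :: (real^'n) measure). \<bar>y $ i * y $ j\<bar> \<le> 1"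
  using AE_sphere_norm
proof eventually_elim
  case (elim y)
  have "\<bar>y $ i\<bar> \<le> 1" "\<bar>y $ j\<bar> \<le> 1" using component_le_norm_cart[of y] elim by (metis)+
  then show ?case by (simp add: abs_mult mult_le_one)
qed

lemma sphere_int_ij: "integrable (uniform_sphere :: (real^'n) measure) (\<lambda>y. y $ i * y $ j)"
  by (rule integrable_sphere[OF _ AE_mp[OF sphere_bound_AE]]) auto

lemma sphere_moment_off:
  assumes "i \<noteq> j"
  shows "(\<integral>y. y $ i * y $ j \<partial>(uniform_sphere :: (real^'n) measure)) = 0"
proof -
  define s where "s = (\<lambda>k. if k = i then -1 else (1::real))"
  have s: "\<And>k. s k = 1 \<or> s k = -1" by (simp add: s_def)
  have "(\<integral>y. (Tps id s y) $ i * (Tps id s y) $ j \<partial>(uniform_sphere :: (real^'n) measure))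
        = (\<integral>y. y $ i * y $ j \<partial>uniform_sphere)"
    by (rule integral_sphere_Tps[OF bij_id s, of "\<lambda>y. y $ i * y $ j"]) simp
  moreover have "(\<lambda>y. (Tps id s y) $ i * (Tps id s y) $ j) = (\<lambda>y::real^'n. - (y $ i * y $ j))"
    using assms by (auto simp: Tps_def s_def)
  ultimately show ?thesis by simp
qed

lemma sphere_moment_diag_eq:
  "(\<integral>y. y $ i * y $ i \<partial>(uniform_sphere :: (real^'n) measure)) =
   (\<integral>y. y $ j * y $ j \<partial>(uniform_sphere :: (real^'n) measure))"
proof -
  define p where "p = (\<lambda>k. if k = i then j else if k = j then i else k)"
  have "p \<circ> p = id" by (auto simp: p_def fun_eq_iff)
  then have p: "bij p" by (metis o_bij)
  have s: "\<And>k. (\<lambda>_. 1::real) k = 1 \<or> (\<lambda>_. 1::real) k = -1" by simp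
  have "(\<integral>y. (Tps p (\<lambda>_. 1) y) $ i * (Tps p (\<lambda>_. 1) y) $ i \<partial>(uniform_sphere :: (real^'n) measure))
        = (\<integral>y. y $ i * y $ i \<partial>uniform_sphere)"
    by (rule integral_sphere_Tps[OF p s, of "\<lambda>y. y $ i * y $ i"]) simp
  moreover have "(\<lambda>y. (Tps p (\<lambda>_. 1) y) $ i * (Tps p (\<lambda>_. 1) y) $ i) = (\<lambda>y::real^'n. y $ j * y $ j)"
    by (auto simp: Tps_def p_def)
  ultimately show ?thesis by simp
qed

lemma sphere_moment_diag:
  "(\<integral>y. y $ i * y $ i \<partial>(uniform_sphere :: (real^'n) measure)) = 1 / real CARD('n)"
proof -
  let ?m = "\<lambda>j. (\<integral>y. y $ j * y $ j \<partial>(uniform_sphere :: (real^'n) measure))"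
  have "(\<Sum>j\<in>UNIV. ?m j) = (\<integral>y. (\<Sum>j\<in>UNIV. y $ j * y $ j) \<partial>(uniform_sphere :: (real^'n) measure))"
    by (rule Bochner_Integration.integral_sum[where I=UNIV and f="\<lambda>(j::'n) (y::real^'n). y $ j * y $ j", symmetric]) (rule sphere_int_ij)
  also have "\<dots> = (\<integral>y. 1 \<partial>(uniform_sphere :: (real^'n) measure))"
  proof (rule integral_cong_AE)
    show "AE y in uniform_sphere. (\<Sum>j\<in>UNIV. y $ j * y $ j) = 1"
      using AE_sphere_norm
    proof eventually_elim
      case (elim y)
      then have "y \<bullet> y = 1" by (simp add: norm_eq_sqrt_inner)
      then show ?case by (simp add: inner_vec_def)
    qed
  qed (auto intro!: meas_S)
  also have "\<dots> = 1" using prob_space.prob_space[OF prob_sphere] by simp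
  finally have "(\<Sum>j\<in>UNIV. ?m j) = 1" .
  moreover have "(\<Sum>j\<in>UNIV. ?m j) = (\<Sum>j\<in>(UNIV::'n set). ?m i)"
    by (rule sum.cong, simp, rule sphere_moment_diag_eq)
  ultimately have "real CARD('n) * ?m i = 1" by simp
  then show ?thesis by (simp add: field_simps)
qed

lemma sphere_moment:
  "(\<integral>y. y $ i * y $ j \<partial>(uniform_sphere :: (real^'n) measure)) = (if i = j then 1 / real CARD('n) else 0)"
  by (cases "i = j") (simp_all add: sphere_moment_off sphere_moment_diag)

lemma sphere_quad:
  fixes g w :: "real^'n"
  shows "(\<integral>y. (g \<bullet> y) * (y \<bullet> w) \<partial>uniform_sphere) = (g \<bullet> w) / real CARD('n)"
proof -
  have eq: "(g \<bullet> y) * (y \<bullet> w) = (\<Sum>i\<in>UNIV. \<Sum>j\<in>UNIV. (g $ i * w $ j) * (y $ i * y $ j))" for y :: "real^'n"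
    by (simp add: inner_vec_def sum_product algebra_simps)
  have "(\<integral>y. (g \<bullet> y) * (y \<bullet> w) \<partial>uniform_sphere) =
     (\<Sum>i\<in>UNIV. \<Sum>j\<in>UNIV. (g $ i * w $ j) * (\<integral>y. y $ i * y $ j \<partial>(uniform_sphere :: (real^'n) measure)))"
    unfolding eq
  proof (subst Bochner_Integration.integral_sum[where I=UNIV and f="\<lambda>(i::'n) (y::real^'n). \<Sum>j\<in>UNIV. (g $ i * w $ j) * (y $ i * y $ j)"])
    show "\<And>i. i \<in> UNIV \<Longrightarrow> integrable uniform_sphere (\<lambda>y. \<Sum>j\<in>UNIV. g $ i * w $ j * (y $ i * y $ j))"
      by (auto intro!: Bochner_Integration.integrable_sum integrable_mult_right sphere_int_ij)
    show "(\<Sum>i\<in>UNIV. \<integral>y. (\<Sum>j\<in>UNIV. g $ i * w $ j * (y $ i * y $ j)) \<partial>uniform_sphere) =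
      (\<Sum>i\<in>UNIV. \<Sum>j\<in>UNIV. g $ i * w $ j * (\<integral>y. y $ i * y $ j \<partial>uniform_sphere))"
    proof (intro sum.cong refl)
      fix i
      show "(\<integral>y. (\<Sum>j\<in>UNIV. g $ i * w $ j * (y $ i * y $ j)) \<partial>uniform_sphere) =
         (\<Sum>j\<in>UNIV. g $ i * w $ j * (\<integral>y. y $ i * y $ j \<partial>uniform_sphere))"
        by (subst Bochner_Integration.integral_sum[where I=UNIV and f="\<lambda>(j::'n) (y::real^'n). g $ i * w $ j * (y $ i * y $ j)"])
          (auto intro!: integrable_mult_right sphere_int_ij)
    qed
  qed
  also have "\<dots> = (\<Sum>i\<in>UNIV. g $ i * w $ i / real CARD('n))"
    by (simp add: sphere_moment if_distrib sum.If_cases cong: if_cong)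
  also have "\<dots> = (g \<bullet> w) / real CARD('n)"
    by (simp add: inner_vec_def sum_divide_distrib)
  finally show ?thesis .
qed


lemma indep_expect_lower:
  fixes X :: "'a \<Rightarrow> 'b::{second_countable_topology,banach}" and Y :: "'a \<Rightarrow> 'b"
    and H :: "'b \<times> 'b \<Rightarrow> real" and L :: "'b \<Rightarrow> real"
  assumes P: "prob_space M" and ind: "prob_space.indep_var M borel X borel Y"
    and Hm: "H \<in> borel_measurable borel" and Hb: "\<And>p. \<bar>H p\<bar> \<le> c"
    and Lm: "L \<in> borel_measurable borel" and Lb: "\<And>x. \<bar>L x\<bar> \<le> c'"
    and low: "\<And>x. x \<in> S \<Longrightarrow> L x \<le> (\<integral>y. H (x, y) \<partial>distr M borel Y)"
    and XS: "\<And>\<omega>. \<omega> \<in> space M \<Longrightarrow> X \<omega> \<in> S"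
  shows "(\<integral>\<omega>. L (X \<omega>) \<partial>M) \<le> (\<integral>\<omega>. H (X \<omega>, Y \<omega>) \<partial>M)"
proof -
  interpret prob_space M by (rule P)
  have Xm: "X \<in> borel_measurable M" and Ym: "Y \<in> borel_measurable M"
    using ind indep_var_rv1 indep_var_rv2 by blast+
  let ?PX = "distr M borel X" and ?PY = "distr M borel Y"
  interpret PX: prob_space ?PX by (rule prob_space_distr[OF Xm])
  interpret PY: prob_space ?PY by (rule prob_space_distr[OF Ym])
  interpret PXY: pair_prob_space ?PX ?PY ..
  have dist: "?PX \<Otimes>\<^sub>M ?PY = distr M (borel \<Otimes>\<^sub>M borel) (\<lambda>x. (X x, Y x))"
    using ind by (simp add: indep_var_distribution_eq)
  have Hm2: "H \<in> borel_measurable (borel \<Otimes>\<^sub>M borel)" using Hm by (simp add: borel_prod)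
  have XYm: "(\<lambda>x. (X x, Y x)) \<in> M \<rightarrow>\<^sub>M borel \<Otimes>\<^sub>M borel" using Xm Ym by (rule measurable_Pair)
  have HPm: "H \<in> borel_measurable (?PX \<Otimes>\<^sub>M ?PY)"
    using Hm2 by (simp add: measurable_cong_sets[OF sets_pair_measure_cong[OF sets_distr sets_distr] refl])
  have Hint: "integrable (?PX \<Otimes>\<^sub>M ?PY) H"
    by (rule PXY.integrable_const_bound[of _ c]) (use Hb HPm in auto)
  have "(\<integral>\<omega>. H (X \<omega>, Y \<omega>) \<partial>M) = (\<integral>p. H p \<partial>distr M (borel \<Otimes>\<^sub>M borel) (\<lambda>x. (X x, Y x)))"
    by (rule integral_distr[OF XYm Hm2, symmetric])
  also have "\<dots> = (\<integral>p. H p \<partial>(?PX \<Otimes>\<^sub>M ?PY))" by (simp add: dist)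
  also have "\<dots> = (\<integral>x. (\<integral>y. H (x, y) \<partial>?PY) \<partial>?PX)"
    by (rule PXY.integral_fst'[OF Hint, symmetric])
  finally have eq1: "(\<integral>\<omega>. H (X \<omega>, Y \<omega>) \<partial>M) = (\<integral>x. (\<integral>y. H (x, y) \<partial>?PY) \<partial>?PX)" .
  have hint: "integrable ?PX (\<lambda>x. \<integral>y. H (x, y) \<partial>?PY)"
    by (rule PXY.integrable_fst'[OF Hint])
  then have hm: "(\<lambda>x. \<integral>y. H (x, y) \<partial>?PY) \<in> borel_measurable borel"
    using borel_measurable_integrable by fastforce
  have hintM: "integrable M (\<lambda>\<omega>. \<integral>y. H (X \<omega>, y) \<partial>?PY)"
    using hint by (simp add: integrable_distr_eq[OF Xm hm])
  have eq2: "(\<integral>x. (\<integral>y. H (x, y) \<partial>?PY) \<partial>?PX) = (\<integral>\<omega>. (\<integral>y. H (X \<omega>, y) \<partial>?PY) \<partial>M)"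
    by (rule integral_distr[OF Xm hm])
  have LintM: "integrable M (\<lambda>\<omega>. L (X \<omega>))"
    by (rule integrable_const_bound[of _ c']) (use Lb Lm Xm in auto)
  have "(\<integral>\<omega>. L (X \<omega>) \<partial>M) \<le> (\<integral>\<omega>. (\<integral>y. H (X \<omega>, y) \<partial>?PY) \<partial>M)"
    by (rule integral_mono[OF LintM hintM]) (use low XS in auto)
  then show ?thesis using eq1 eq2 by simp
qed



lemma cvec_nth[simp]: "cvec x y $ j = Complex (x $ j) (y $ j)"
  by (simp add: cvec_def)

lemma continuous_on_cvec: "continuous_on S (\<lambda>p. cvec (fst p) (snd p))"
proof -
  have eq: "(\<lambda>p. cvec (fst p) (snd p)) = (\<lambda>p. \<chi> j. complex_of_real (fst p $ j) + \<i> * complex_of_real (snd p $ j))"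
    by (auto simp: cvec_def vec_eq_iff complex_eq_iff)
  show ?thesis unfolding eq
    by (intro continuous_on_vec_lambda continuous_intros)
qed

lemma continuous_on_cvec2: "continuous_on S a \<Longrightarrow> continuous_on S b \<Longrightarrow> continuous_on S (\<lambda>p. cvec (a p) (b p))"
  using continuous_on_compose2[OF continuous_on_cvec[of UNIV], of S "\<lambda>p. (a p, b p)"]
  by (auto intro: continuous_intros)

lemma cvec_in_strip:
  assumes "x \<in> D" "norm y < d" shows "cvec x y \<in> strip D d"
proof -
  have "\<forall>j. \<bar>y $ j\<bar> < d" using component_le_norm_cart[of y] assms(2) by (meson le_less_trans)
  then show ?thesis using assms(1) by (auto simp: strip_def)
qed

definition dF :: "(complex^'n \<Rightarrow> complex) \<Rightarrow> complex^'n \<Rightarrow> complex^'n \<Rightarrow> complex" where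
  "dF F z = (SOME F'. (F has_derivative F') (at z) \<and> (\<forall>v. F' (\<chi> j. \<i> * v $ j) = \<i> * F' v))"

lemma dF:
  assumes "holomorphic_vec_on F S" "z \<in> S"
  shows "(F has_derivative dF F z) (at z)" "\<And>v. dF F z (\<chi> j. \<i> * v $ j) = \<i> * dF F z v"
proof -
  have "\<exists>F'. (F has_derivative F') (at z) \<and> (\<forall>v. F' (\<chi> j. \<i> * v $ j) = \<i> * F' v)"
    using assms by (auto simp: holomorphic_vec_on_def)
  from someI_ex[OF this] show "(F has_derivative dF F z) (at z)" "\<And>v. dF F z (\<chi> j. \<i> * v $ j) = \<i> * dF F z v"
    unfolding dF_def by blast+
qed

lemma holo_cont: "holomorphic_vec_on F S \<Longrightarrow> continuous_on S F"
  by (meson continuous_at_imp_continuous_on dF(1) has_derivative_continuous)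

lemma dF_line:
  assumes hol: "holomorphic_vec_on F S" and z: "z \<in> S"
  shows "(\<lambda>h. dF F z (\<chi> j. h * c $ j)) = (\<lambda>h. dF F z c * h)"
proof
  fix h :: complex
  interpret L: bounded_linear "dF F z" using dF(1)[OF hol z] by (rule has_derivative_bounded_linear)
  have v: "(\<chi> j. h * c $ j) = Re h *\<^sub>R c + Im h *\<^sub>R (\<chi> j. \<i> * c $ j)"
    by (simp add: vec_eq_iff complex_eq_iff algebra_simps)
  have "dF F z (\<chi> j. h * c $ j) = Re h *\<^sub>R dF F z c + Im h *\<^sub>R (\<i> * dF F z c)"
    unfolding v L.add L.scaleR dF(2)[OF hol z] ..
  also have "\<dots> = dF F z c * h"
    by (simp add: scaleR_conv_of_real complex_eq_iff algebra_simps)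
  finally show "dF F z (\<chi> j. h * c $ j) = dF F z c * h" .
qed

lemma line_deriv:
  assumes hol: "holomorphic_vec_on F S" and z: "z0 + (\<chi> j. s * c $ j) \<in> S"
  shows "((\<lambda>s. F (z0 + (\<chi> j. s * c $ j))) has_field_derivative dF F (z0 + (\<chi> j. s * c $ j)) c) (at s)"
proof -
  let ?L = "\<lambda>s::complex. z0 + (\<chi> j. s * c $ j)"
  have L: "(?L has_derivative (\<lambda>h. \<chi> j. h * c $ j)) (at s)"
  proof -
    have bl: "bounded_linear (\<lambda>h::complex. \<chi> j. h * c $ j)"
      by (rule bounded_linearI') (auto simp: vec_eq_iff algebra_simps complex_eq_iff)
    have "((\<lambda>h::complex. \<chi> j. h * c $ j) has_derivative (\<lambda>h. \<chi> j. h * c $ j)) (at s)"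
      using bl by (rule bounded_linear_imp_has_derivative)
    then show ?thesis by (auto intro!: derivative_eq_intros)
  qed
  have "((\<lambda>s. F (?L s)) has_derivative (\<lambda>h. dF F (?L s) (\<chi> j. h * c $ j))) (at s)"
    using has_derivative_compose[OF L dF(1)[OF hol z]] by (simp add: o_def)
  then show ?thesis
    unfolding has_field_derivative_def dF_line[OF hol z] by (simp add: mult.commute)
qed

lemma Im_deriv_real:
  fixes \<phi> :: "complex \<Rightarrow> complex"
  assumes hol: "\<phi> holomorphic_on ball 0 \<rho>"
    and re: "\<And>t::real. \<bar>t\<bar> < \<rho> \<Longrightarrow> Im (\<phi> (of_real t)) = 0"
    and t: "\<bar>t\<bar> < \<rho>"
  shows "Im (deriv \<phi> (of_real t)) = 0"
proof -
  have tin: "complex_of_real t \<in> ball 0 \<rho>" using t by simp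
  have d: "(\<phi> has_field_derivative deriv \<phi> (of_real t)) (at (of_real t))"
    by (rule holomorphic_derivI[OF hol open_ball tin])
  have "(\<phi> \<circ> complex_of_real has_vector_derivative 1 * deriv \<phi> (of_real t)) (at t)"
  proof (rule field_vector_diff_chain_at[of complex_of_real 1 t \<phi>])
    show "(complex_of_real has_vector_derivative 1) (at t)" by (auto intro!: derivative_eq_intros)
  qed (use d in simp)
  then have "((\<lambda>x. Im ((\<phi> \<circ> complex_of_real) x)) has_real_derivative Im (deriv \<phi> (of_real t))) (at t)"
    using has_field_derivative_Im by fastforce
  then have h1: "((\<lambda>x. Im ((\<phi> \<circ> complex_of_real) x)) has_derivative (*) (Im (deriv \<phi> (of_real t)))) (at t)"
    by (simp add: has_field_derivative_def)
  have h2: "((\<lambda>x. 0::real) has_derivative (*) (Im (deriv \<phi> (of_real t)))) (at t)"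
    by (rule has_derivative_transform_within_open[OF h1, of "{-\<rho><..<\<rho>}"])
       (use t re in \<open>auto simp: abs_less_iff\<close>)
  then have "((\<lambda>x. 0::real) has_real_derivative (Im (deriv \<phi> (of_real t)))) (at t)"
    by (simp add: has_field_derivative_def)
  from DERIV_unique[OF this DERIV_const] show ?thesis .
qed

lemma line_eq: "cvec x 0 + (\<chi> j. s * cvec y 0 $ j) = cvec (x + Re s *\<^sub>R y) (Im s *\<^sub>R y)"
  by (simp add: vec_eq_iff complex_eq_iff)

lemma norm_Re_scale: "norm y \<le> 1 \<Longrightarrow> norm (Re s *\<^sub>R y) \<le> cmod s"
  using abs_Re_le_cmod[of s] by (simp add: mult_le_one order_trans[OF mult_left_le])

lemma norm_Im_scale: "norm y \<le> 1 \<Longrightarrow> norm (Im s *\<^sub>R y) \<le> cmod s"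
  using abs_Im_le_cmod[of s] by (simp add: mult_le_one order_trans[OF mult_left_le])

lemma chi_zero[simp]: "(\<chi> j. 0) = (0 :: 'a::zero^'n)"
  by (simp add: vec_eq_iff)

lemma tri_cmod: "cmod (x::complex) \<le> cmod \<xi> + cmod (\<xi> - x)"
  using norm_triangle_ineq4[of \<xi> "\<xi> - x"] by simp

lemma taylor_bound:
  fixes f :: "real^'n \<Rightarrow> real" and F :: "complex^'n \<Rightarrow> complex"
  assumes D: "open D" and hol: "holomorphic_vec_on F (strip D dbar)"
    and ext: "\<forall>z\<in>D. F (cvec z 0) = complex_of_real (f z)"
    and K: "compact K" "K \<subseteq> D" "K \<noteq> {}"
    and dl: "0 < \<delta>" "\<delta> < dbar"
  shows "\<exists>C. \<forall>x\<in>K. \<forall>y. norm y \<le> 1 \<longrightarrow> (\<forall>t. 0 < t \<and> t \<le> \<delta> \<longrightarrow>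
     \<bar>Im (F (cvec x (t *\<^sub>R y))) - t * Re (dF F (cvec x 0) (cvec y 0))\<bar> \<le> C * t^3)"
proof -
  obtain e where e: "e > 0" "{z. infdist z K \<le> e} \<subseteq> D"
    using compact_in_open_separated[OF K(3) K(1) D K(2)] by blast
  define A2 where "A2 = {z. infdist z K \<le> e}"
  have A2c: "compact A2" unfolding A2_def using compact_infdist_le[OF K(3) K(1) e(1)] .
  have A2D: "A2 \<subseteq> D" using e by (simp add: A2_def)
  define R where "R = min e dbar / 4"
  have R: "R > 0" "4 * R \<le> e" "4 * R \<le> dbar" using e dl by (auto simp: R_def)
  have Fc: "continuous_on (strip D dbar) F" by (rule holo_cont[OF hol])
  define Q1 where "Q1 = (\<lambda>p. cvec (fst p) (snd p)) ` (A2 \<times> cball (0::real^'n) (2*R))"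
  have Q1c: "compact Q1" unfolding Q1_def
    by (intro compact_continuous_image continuous_on_cvec compact_Times A2c compact_cball)
  have Q1s: "Q1 \<subseteq> strip D dbar" unfolding Q1_def
    using A2D R by (auto intro!: cvec_in_strip)
  have "compact (F ` Q1)" by (rule compact_continuous_image[OF continuous_on_subset[OF Fc Q1s] Q1c])
  then obtain M where M: "M > 0" "\<And>z. z \<in> Q1 \<Longrightarrow> cmod (F z) \<le> M"
    using compact_imp_bounded bounded_pos by (metis imageI)
  define Q2 where "Q2 = (\<lambda>p. cvec (fst p) (snd p)) ` (K \<times> cball (0::real^'n) \<delta>)"
  have Q2c: "compact Q2" unfolding Q2_def
    by (intro compact_continuous_image continuous_on_cvec compact_Times K compact_cball)
  have Q2s: "Q2 \<subseteq> strip D dbar" unfolding Q2_def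
    using K dl by (auto intro!: cvec_in_strip)
  have "compact (F ` Q2)" by (rule compact_continuous_image[OF continuous_on_subset[OF Fc Q2s] Q2c])
  then obtain B where B: "B > 0" "\<And>z. z \<in> Q2 \<Longrightarrow> cmod (F z) \<le> B"
    using compact_imp_bounded bounded_pos by (metis imageI)
  define C where "C = max (3 * M / R^3) ((B + \<delta> * M / R) / R^3)"
  show ?thesis
  proof (intro exI[of _ C] ballI allI impI, elim conjE)
    fix x y :: "real^'n" and t :: real assume x: "x \<in> K" and y: "norm y \<le> 1" and t: "0 < t" "t \<le> \<delta>"
    define z0 where "z0 = cvec x 0"
    define cy where "cy = cvec y (0::real^'n)"
    define g where "g = (\<lambda>s. F (z0 + (\<chi> j. s * cy $ j)))"
    have geq: "g s = F (cvec (x + Re s *\<^sub>R y) (Im s *\<^sub>R y))" for s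
      unfolding g_def z0_def cy_def by (subst line_eq) (rule refl)
    have inA2: "x + Re s *\<^sub>R y \<in> A2" if "cmod s \<le> e" for s
    proof -
      have "dist (x + Re s *\<^sub>R y) x \<le> e"
        using norm_Re_scale[OF y, of s] that by (simp add: dist_norm)
      then show ?thesis unfolding A2_def using infdist_le2[OF x] by blast
    qed
    have instrip: "z0 + (\<chi> j. s * cy $ j) \<in> strip D dbar" if "cmod s < 4 * R" for s
    proof -
      have "x + Re s *\<^sub>R y \<in> D" using inA2[of s] that R A2D by auto
      moreover have "norm (Im s *\<^sub>R y) < dbar" using norm_Im_scale[OF y, of s] that R by auto
      ultimately show ?thesis unfolding z0_def cy_def line_eq by (rule cvec_in_strip)
    qed
    have gd: "(g has_field_derivative dF F (z0 + (\<chi> j. s * cy $ j)) cy) (at s)" if "cmod s < 4 * R" for s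
      unfolding g_def by (rule line_deriv[OF hol instrip[OF that]])
    have holg: "g holomorphic_on ball 0 (4 * R)"
      using gd by (auto simp: holomorphic_on_open dist_norm) blast
    have gM: "cmod (g s) \<le> M" if "cmod s \<le> 2 * R" for s
    proof -
      have "cvec (x + Re s *\<^sub>R y) (Im s *\<^sub>R y) \<in> Q1"
        unfolding Q1_def using inA2[of s] that R norm_Im_scale[OF y, of s]
        by (auto intro!: image_eqI[of _ _ "(x + Re s *\<^sub>R y, Im s *\<^sub>R y)"])
      then show ?thesis using M(2) geq by simp
    qed
    have cauchy: "cmod ((deriv ^^ n) g \<xi>) \<le> fact n * M / R ^ n" if "cmod \<xi> \<le> R" for n \<xi>
    proof (rule Cauchy_inequality)
      show "g holomorphic_on ball \<xi> R"
      proof (rule holomorphic_on_subset[OF holg], rule subsetI)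
        fix w assume "w \<in> ball \<xi> R"
        then show "w \<in> ball 0 (4 * R)" using that R tri_cmod[of w \<xi>] by (simp add: dist_norm)
      qed
      have "g holomorphic_on cball \<xi> R"
      proof (rule holomorphic_on_subset[OF holg], rule subsetI)
        fix w assume "w \<in> cball \<xi> R"
        then show "w \<in> ball 0 (4 * R)" using that R tri_cmod[of w \<xi>] by (simp add: dist_norm)
      qed
      then show "continuous_on (cball \<xi> R) g" by (rule holomorphic_on_imp_continuous_on)
      show "cmod (g w) \<le> M" if "cmod (\<xi> - w) = R" for w
        using norm_triangle_ineq2[of w \<xi>] that \<open>cmod \<xi> \<le> R\<close> gM[of w]
        by (simp add: norm_minus_commute)
    qed (use R in auto)
    have g0: "g 0 = complex_of_real (f x)"
      using ext x K(2) by (auto simp: g_def z0_def)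
    have dg0: "deriv g 0 = dF F z0 cy"
      using DERIV_imp_deriv[OF gd[of 0]] R by simp
    have re0: "Im (g (of_real \<tau>)) = 0" if "\<bar>\<tau>\<bar> < 4 * R" for \<tau>
    proof -
      have "x + \<tau> *\<^sub>R y \<in> D" using inA2[of "of_real \<tau>"] that R A2D by auto
      then show ?thesis using ext by (simp add: geq)
    qed
    have re1: "Im (deriv g (of_real \<tau>)) = 0" if "\<bar>\<tau>\<bar> < 4 * R" for \<tau>
      by (rule Im_deriv_real[OF holg re0 that])
    have re2: "Im ((deriv ^^ 2) g 0) = 0"
    proof -
      have "Im (deriv (deriv g) (of_real 0)) = 0"
        by (rule Im_deriv_real[OF holomorphic_deriv[OF holg open_ball] re1]) (use R in auto)
      then show ?thesis by (simp add: numeral_2_eq_2)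
    qed
    have d1: "cmod (deriv g 0) \<le> M / R"
      using cauchy[of 0 1] R by simp
    have "\<bar>Im (g (\<i> * of_real t)) - t * Re (deriv g 0)\<bar> \<le> C * t ^ 3"
    proof (cases "t \<le> R")
      case True
      have tay0: "cmod ((deriv ^^ 0) g (\<i> * of_real t) - (\<Sum>i\<le>2. (deriv ^^ i) g 0 * (\<i> * of_real t - 0) ^ i / fact i))
          \<le> (fact 3 * M / R ^ 3) * cmod (\<i> * of_real t - 0) ^ Suc 2 / fact 2"
      proof (rule complex_Taylor[of "cball 0 R" 2 "\<lambda>i. (deriv ^^ i) g"])
        show "convex (cball (0::complex) R)" by simp
        fix i :: nat and s :: complex assume s: "s \<in> cball 0 R" and "i \<le> 2"
        have "((deriv ^^ i) g has_field_derivative deriv ((deriv ^^ i) g) s) (at s within cball 0 R)"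
          by (rule holomorphic_derivI[OF holomorphic_higher_deriv[OF holg open_ball] open_ball])
            (use s R in auto)
        then show "((deriv ^^ i) g has_field_derivative (deriv ^^ Suc i) g s) (at s within cball 0 R)"
          by simp
      next
        fix s :: complex assume "s \<in> cball 0 R"
        then show "cmod ((deriv ^^ Suc 2) g s) \<le> fact 3 * M / R ^ 3"
          using cauchy[of s 3] by (simp add: numeral_3_eq_3)
      qed (use True t R in \<open>auto simp: norm_mult\<close>)
      then have tay: "cmod (g (\<i> * of_real t) - (\<Sum>i\<le>2. (deriv ^^ i) g 0 * (\<i> * of_real t - 0) ^ i / fact i))
          \<le> (fact 3 * M / R ^ 3) * cmod (\<i> * of_real t - 0) ^ Suc 2 / fact 2" by simp
      have sum3: "(\<Sum>i\<le>2. (deriv ^^ i) g 0 * (\<i> * of_real t - 0) ^ i / fact i) =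
         g 0 + deriv g 0 * (\<i> * of_real t) + (deriv ^^ 2) g 0 * (\<i> * of_real t)^2 / 2"
        by (simp add: numeral_2_eq_2)
      have Imsum: "Im (\<Sum>i\<le>2. (deriv ^^ i) g 0 * (\<i> * of_real t - 0) ^ i / fact i) = t * Re (deriv g 0)"
        unfolding sum3 using re2 g0 by (simp add: power2_eq_square)
      have "\<bar>Im (g (\<i> * of_real t)) - t * Re (deriv g 0)\<bar>
         = \<bar>Im (g (\<i> * of_real t) - (\<Sum>i\<le>2. (deriv ^^ i) g 0 * (\<i> * of_real t - 0) ^ i / fact i))\<bar>"
        using Imsum by simp
      also have "\<dots> \<le> cmod (g (\<i> * of_real t) - (\<Sum>i\<le>2. (deriv ^^ i) g 0 * (\<i> * of_real t - 0) ^ i / fact i))"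
        by (rule abs_Im_le_cmod)
      also have "\<dots> \<le> (fact 3 * M / R ^ 3) * cmod (\<i> * of_real t - 0) ^ Suc 2 / fact 2" by (rule tay)
      also have "\<dots> = 3 * M / R^3 * t^3"
        using t by (simp add: norm_mult fact_numeral)
      also have "\<dots> \<le> C * t^3"
        using t by (intro mult_right_mono) (auto simp: C_def)
      finally show ?thesis .
    next
      case False
      have "cvec x (t *\<^sub>R y) \<in> Q2"
        unfolding Q2_def using x t y
        by (auto intro!: image_eqI[of _ _ "(x, t *\<^sub>R y)"] simp: mult_le_one order_trans[OF mult_left_le])
      then have FB: "cmod (g (\<i> * of_real t)) \<le> B" using B(2) by (simp add: geq)
      have "\<bar>Im (g (\<i> * of_real t)) - t * Re (deriv g 0)\<bar> \<le> cmod (g (\<i> * of_real t)) + t * cmod (deriv g 0)"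
      proof -
        have "\<bar>t * Re (deriv g 0)\<bar> \<le> t * cmod (deriv g 0)"
          using abs_Re_le_cmod[of "deriv g 0"] t by (simp add: abs_mult mult_left_mono)
        then show ?thesis
          using abs_Im_le_cmod[of "g (\<i> * of_real t)"] abs_triangle_ineq4[of "Im (g (\<i> * of_real t))" "t * Re (deriv g 0)"]
          by linarith
      qed
      also have "\<dots> \<le> B + \<delta> * (M / R)"
        using FB d1 t by (intro add_mono mult_mono) (auto intro: order_trans[OF norm_ge_zero d1])
      also have "\<dots> = (B + \<delta> * M / R) / R^3 * R^3" using R by simp
      also have "\<dots> \<le> (B + \<delta> * M / R) / R^3 * t^3"
        using False R B M dl by (intro mult_left_mono power_mono) auto
      also have "\<dots> \<le> C * t^3"
        using t by (intro mult_right_mono) (auto simp: C_def)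
      finally show ?thesis .
    qed
    moreover have "g (\<i> * of_real t) = F (cvec x (t *\<^sub>R y))" by (simp add: geq)
    ultimately show "\<bar>Im (F (cvec x (t *\<^sub>R y))) - t * Re (dF F (cvec x 0) (cvec y 0))\<bar> \<le> C * t ^ 3"
      using dg0 by (simp add: z0_def cy_def)
  qed
qed

lemma bl_cvec0: "bounded_linear (\<lambda>v::real^'n. cvec v 0)"
  by (rule bounded_linearI') (auto simp: vec_eq_iff complex_eq_iff)

lemma f_deriv:
  fixes f :: "real^'n \<Rightarrow> real" and F :: "complex^'n \<Rightarrow> complex"
  assumes D: "open D" and hol: "holomorphic_vec_on F (strip D dbar)" and dbar: "0 < dbar"
    and ext: "\<forall>z\<in>D. F (cvec z 0) = complex_of_real (f z)" and x: "x \<in> D"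
  shows "(f has_derivative (\<lambda>v. Re (dF F (cvec x 0) (cvec v 0)))) (at x)"
proof -
  have xs: "cvec x 0 \<in> strip D dbar" using x dbar by (intro cvec_in_strip) auto
  have c: "((\<lambda>v::real^'n. cvec v 0) has_derivative (\<lambda>v. cvec v 0)) (at x)"
    by (rule bounded_linear_imp_has_derivative[OF bl_cvec0])
  have "((\<lambda>z. F (cvec z 0)) has_derivative (\<lambda>v. dF F (cvec x 0) (cvec v 0))) (at x)"
    using has_derivative_compose[OF c dF(1)[OF hol xs]] by (simp add: o_def)
  then have "((\<lambda>z. Re (F (cvec z 0))) has_derivative (\<lambda>v. Re (dF F (cvec x 0) (cvec v 0)))) (at x)"
    by (rule bounded_linear.has_derivative[OF bounded_linear_Re])
  then show ?thesis
    by (rule has_derivative_transform_within_open[OF _ D x]) (use ext in simp)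
qed

lemma f_cont:
  fixes f :: "real^'n \<Rightarrow> real" and F :: "complex^'n \<Rightarrow> complex"
  assumes D: "open D" and hol: "holomorphic_vec_on F (strip D dbar)" and dbar: "0 < dbar"
    and ext: "\<forall>z\<in>D. F (cvec z 0) = complex_of_real (f z)"
  shows "continuous_on D f"
  by (rule continuous_at_imp_continuous_on)
     (meson has_derivative_continuous f_deriv[OF assms])

lemma grad_inner:
  fixes f :: "real^'n \<Rightarrow> real" and F :: "complex^'n \<Rightarrow> complex"
  assumes D: "open D" and hol: "holomorphic_vec_on F (strip D dbar)" and dbar: "0 < dbar"
    and ext: "\<forall>z\<in>D. F (cvec z 0) = complex_of_real (f z)" and x: "x \<in> D"
  shows "grad f x \<bullet> y = Re (dF F (cvec x 0) (cvec y 0))"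
proof -
  have xs: "cvec x 0 \<in> strip D dbar" using x dbar by (intro cvec_in_strip) auto
  interpret L: bounded_linear "dF F (cvec x 0)" using dF(1)[OF hol xs] by (rule has_derivative_bounded_linear)
  have fd: "frechet_derivative f (at x) = (\<lambda>v. Re (dF F (cvec x 0) (cvec v 0)))"
    using frechet_derivative_at[OF f_deriv[OF assms]] by simp
  have cy: "cvec y 0 = (\<Sum>i\<in>UNIV. y $ i *\<^sub>R cvec (axis i 1) 0)"
  proof -
    interpret C: bounded_linear "\<lambda>v::real^'n. cvec v 0" by (rule bl_cvec0)
    have y: "y = (\<Sum>i\<in>UNIV. y $ i *\<^sub>R axis i 1)" using basis_expansion[of y] by (simp add: scalar_mult_eq_scaleR)
    have "cvec y 0 = cvec (\<Sum>i\<in>UNIV. y $ i *\<^sub>R axis i 1) 0" by (subst y) (rule refl)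
    also have "\<dots> = (\<Sum>i\<in>UNIV. y $ i *\<^sub>R cvec (axis i 1) 0)" by (simp add: C.sum C.scaleR)
    finally show ?thesis .
  qed
  have "grad f x \<bullet> y = (\<Sum>i\<in>UNIV. Re (dF F (cvec x 0) (cvec (axis i 1) 0)) * y $ i)"
    by (simp add: grad_def fd inner_vec_def)
  also have "\<dots> = Re (dF F (cvec x 0) (cvec y 0))"
    unfolding cy by (simp add: L.sum L.scaleR mult.commute)
  finally show ?thesis .
qed



definition stepf :: "(real^'n) set \<Rightarrow> (complex^'n \<Rightarrow> complex) \<Rightarrow> real \<Rightarrow> real \<Rightarrow> nat \<Rightarrow> real^'n \<Rightarrow> real^'n \<Rightarrow> real \<Rightarrow> real^'n" where
  "stepf K F tau delta k a b \<xi> = closest_point K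
     (closest_point K a - (2 / (tau * real k)) *\<^sub>R
       ((real CARD('n) / (delta * real k powr (-1/6))) *
         (Im (F (cvec (closest_point K a) ((delta * real k powr (-1/6)) *\<^sub>R closest_point (cball 0 1) b))) + \<xi>))
       *\<^sub>R closest_point (cball 0 1) b)"

primrec Psi :: "(real^'n) set \<Rightarrow> (complex^'n \<Rightarrow> complex) \<Rightarrow> real \<Rightarrow> real \<Rightarrow> real^'n \<Rightarrow> nat \<Rightarrow> (nat + nat \<Rightarrow> (real^'n) \<times> real) \<Rightarrow> real^'n" where
  "Psi K F tau delta x1 0 w = x1"
| "Psi K F tau delta x1 (Suc k) w = (if k = 0 then x1 else
     stepf K F tau delta k (Psi K F tau delta x1 k w) (fst (w (Inl k))) (snd (w (Inr k))))"

lemma Psi_K: "x1 \<in> K \<Longrightarrow> closed K \<Longrightarrow> K \<noteq> {} \<Longrightarrow> Psi K F tau delta x1 k w \<in> K"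
  by (induction k) (auto simp: stepf_def closest_point_in_set)

lemma Psi_restrict:
  "{1..<k} <+> {1..<k} \<subseteq> A \<Longrightarrow> Psi K F tau delta x1 k (restrict w A) = Psi K F tau delta x1 k w"
proof (induction k)
  case (Suc k)
  have sub: "{1..<k} <+> {1..<k} \<subseteq> A" using Suc.prems by auto
  show ?case
  proof (cases "k = 0")
    case False
    then have "Inl k \<in> A" "Inr k \<in> A" using Suc.prems by auto
    then show ?thesis using Suc.IH[OF sub] False by simp
  qed simp
qed simp

lemma dk_bounds:
  assumes "k \<ge> 1" "0 < delta"
  shows "0 < delta * real k powr (-1/6)" "delta * real k powr (-1/6) \<le> delta"
proof -
  have "real k powr (-1/6) \<le> real k powr 0" using assms(1) by (intro powr_mono) auto
  then have "real k powr (-1/6) \<le> 1" using assms(1) by simp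
  moreover have "0 < real k powr (-1/6)" using assms(1) by simp
  ultimately show "0 < delta * real k powr (-1/6)" "delta * real k powr (-1/6) \<le> delta"
    using assms(2) by (auto simp: mult_le_cancel_left1 mult_pos_pos)
qed

lemma norm_cp_ball: "norm (closest_point (cball (0::real^'n) 1) b) \<le> 1"
  using closest_point_in_set[of "cball (0::real^'n) 1" b] by simp

lemma F_cont_comp:
  fixes F :: "complex^'n \<Rightarrow> complex"
  assumes hol: "holomorphic_vec_on F (strip D dbar)" and K: "convex K" "closed K" "K \<noteq> {}" "K \<subseteq> D"
    and d: "0 < d" "d < dbar"
  shows "continuous_on UNIV (\<lambda>p. F (cvec (closest_point K (fst p)) (d *\<^sub>R closest_point (cball (0::real^'n) 1) (snd p))))"
proof (rule continuous_on_compose2[OF holo_cont[OF hol]])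
  show "continuous_on UNIV (\<lambda>p. cvec (closest_point K (fst p)) (d *\<^sub>R closest_point (cball (0::real^'n) 1) (snd p)))"
    by (intro continuous_on_cvec2 continuous_intros continuous_on_compose2[OF continuous_on_closest_point]) (use K in auto)
  show "(\<lambda>p. cvec (closest_point K (fst p)) (d *\<^sub>R closest_point (cball (0::real^'n) 1) (snd p))) ` UNIV \<subseteq> strip D dbar"
  proof clarify
    fix a b :: "real^'n"
    have "closest_point K a \<in> D" using K closest_point_in_set[of K a] by auto
    moreover have "norm (d *\<^sub>R closest_point (cball (0::real^'n) 1) b) < dbar"
      using norm_cp_ball[of b] d by (simp add: mult_le_one order_le_less_trans[OF mult_left_le])
    ultimately show "cvec (closest_point K (fst (a, b))) (d *\<^sub>R closest_point (cball 0 1) (snd (a, b))) \<in> strip D dbar"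
      by (simp add: cvec_in_strip)
  qed
qed

lemma stepf_cont:
  fixes F :: "complex^'n \<Rightarrow> complex"
  assumes hol: "holomorphic_vec_on F (strip D dbar)" and K: "convex K" "closed K" "K \<noteq> {}" "K \<subseteq> D"
    and d: "0 < delta" "delta < dbar" and k: "k \<ge> 1"
  shows "continuous_on UNIV (\<lambda>p::(real^'n) \<times> ((real^'n) \<times> real). stepf K F tau delta k (fst p) (fst (snd p)) (snd (snd p)))"
proof -
  define dk where "dk = delta * real k powr (-1/6)"
  have dk: "0 < dk" "dk < dbar" using dk_bounds[OF k d(1)] d unfolding dk_def by linarith+
  have Fc: "continuous_on UNIV (\<lambda>p::(real^'n) \<times> ((real^'n) \<times> real).
      F (cvec (closest_point K (fst p)) (dk *\<^sub>R closest_point (cball (0::real^'n) 1) (fst (snd p)))))"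
    by (rule continuous_on_compose2[OF F_cont_comp[OF hol K dk], of UNIV "\<lambda>p::(real^'n) \<times> ((real^'n) \<times> real). (fst p, fst (snd p))", simplified])
      (intro continuous_on_Pair continuous_on_fst continuous_on_snd continuous_on_id)
  have cpK: "continuous_on UNIV (closest_point K)" by (rule continuous_on_closest_point) (use K in auto)
  have cpB: "continuous_on UNIV (closest_point (cball (0::real^'n) 1))" by (rule continuous_on_closest_point) auto
  show ?thesis unfolding stepf_def dk_def[symmetric]
    by (intro continuous_on_compose2[OF cpK] continuous_intros Fc continuous_on_compose2[OF cpB]
        continuous_on_compose2[OF cpK]) auto
qed

lemma Psi_meas:
  fixes F :: "complex^'n \<Rightarrow> complex"
  assumes hol: "holomorphic_vec_on F (strip D dbar)" and K: "convex K" "closed K" "K \<noteq> {}" "K \<subseteq> D"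
    and d: "0 < delta" "delta < dbar"
  shows "{1..<k} <+> {1..<k} \<subseteq> A \<Longrightarrow> Psi K F tau delta x1 k \<in> borel_measurable (Pi\<^sub>M A (\<lambda>_. borel))"
proof (induction k)
  case (Suc k)
  show ?case
  proof (cases "k = 0")
    case False
    have sub: "{1..<k} <+> {1..<k} \<subseteq> A" using Suc.prems by auto
    have inA: "Inl k \<in> A" "Inr k \<in> A" using Suc.prems False by auto
    have c1: "(\<lambda>w::nat+nat \<Rightarrow> (real^'n) \<times> real. w (Inl k)) \<in> Pi\<^sub>M A (\<lambda>_. borel) \<rightarrow>\<^sub>M (borel :: ((real^'n) \<times> real) measure)"
      using measurable_component_singleton[OF inA(1), of "\<lambda>_. borel"] by simp
    have c2: "(\<lambda>w::nat+nat \<Rightarrow> (real^'n) \<times> real. w (Inr k)) \<in> Pi\<^sub>M A (\<lambda>_. borel) \<rightarrow>\<^sub>M (borel :: ((real^'n) \<times> real) measure)"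
      using measurable_component_singleton[OF inA(2), of "\<lambda>_. borel"] by simp
    have fstm: "(fst :: (real^'n) \<times> real \<Rightarrow> real^'n) \<in> borel_measurable borel"
      by (rule borel_measurable_continuous_onI) (intro continuous_intros)
    have sndm: "(snd :: (real^'n) \<times> real \<Rightarrow> real) \<in> borel_measurable borel"
      by (rule borel_measurable_continuous_onI) (intro continuous_intros)
    have m1: "(\<lambda>w::nat+nat \<Rightarrow> (real^'n) \<times> real. fst (w (Inl k))) \<in> borel_measurable (Pi\<^sub>M A (\<lambda>_. borel))"
      using measurable_compose[OF c1 fstm] by simp
    have m2: "(\<lambda>w::nat+nat \<Rightarrow> (real^'n) \<times> real. snd (w (Inr k))) \<in> borel_measurable (Pi\<^sub>M A (\<lambda>_. borel))"
      using measurable_compose[OF c2 sndm] by simp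
    have trip: "(\<lambda>w. (Psi K F tau delta x1 k w, fst (w (Inl k)), snd (w (Inr k)))) \<in> borel_measurable (Pi\<^sub>M A (\<lambda>_. borel))"
      by (intro borel_measurable_Pair Suc.IH[OF sub] m1 m2)
    have sm: "(\<lambda>p::(real^'n) \<times> ((real^'n) \<times> real). stepf K F tau delta k (fst p) (fst (snd p)) (snd (snd p))) \<in> borel_measurable borel"
      by (rule borel_measurable_continuous_onI[OF stepf_cont[OF hol K d]]) (use False in auto)
    show ?thesis using measurable_compose[OF trip sm] False by simp
  next
    case True
    have "Psi K F tau delta x1 (Suc k) = (\<lambda>w. x1)" using True by (intro ext) simp
    then show ?thesis by simp
  qed
next
  case 0
  have "Psi K F tau delta x1 0 = (\<lambda>w. x1)" by (intro ext) simp
  then show ?case by simp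
qed



lemma F_bound:
  fixes F :: "complex^'n \<Rightarrow> complex"
  assumes hol: "holomorphic_vec_on F (strip D dbar)" and K: "compact K" "K \<subseteq> D"
    and d: "0 < delta" "delta < dbar"
  shows "\<exists>B>0. \<forall>a\<in>K. \<forall>b. norm b \<le> delta \<longrightarrow> cmod (F (cvec a b)) \<le> B"
proof -
  define Q2 where "Q2 = (\<lambda>p. cvec (fst p) (snd p)) ` (K \<times> cball (0::real^'n) delta)"
  have Q2c: "compact Q2" unfolding Q2_def
    by (intro compact_continuous_image continuous_on_cvec compact_Times K compact_cball)
  have Q2s: "Q2 \<subseteq> strip D dbar" unfolding Q2_def
    using K d by (auto intro!: cvec_in_strip)
  have "compact (F ` Q2)" by (rule compact_continuous_image[OF continuous_on_subset[OF holo_cont[OF hol] Q2s] Q2c])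
  then obtain B where B: "B > 0" "\<And>z. z \<in> Q2 \<Longrightarrow> cmod (F z) \<le> B"
    using compact_imp_bounded bounded_pos by (metis imageI)
  show ?thesis
  proof (intro exI[of _ B] conjI ballI allI impI)
    fix a b :: "real^'n" assume "a \<in> K" "norm b \<le> delta"
    then have "cvec a b \<in> Q2" unfolding Q2_def by (auto intro!: image_eqI[of _ _ "(a, b)"])
    then show "cmod (F (cvec a b)) \<le> B" by (rule B(2))
  qed (rule B(1))
qed

lemma sum_powr_bound: "(\<Sum>k=1..n. real k powr (-2/3)) \<le> 3 * real n powr (1/3)"
proof (induction n)
  case (Suc n)
  show ?case
  proof (cases "n = 0")
    case True then show ?thesis by simp
  next
    case False
    define a where "a = real n powr (1/3)"
    define b where "b = real (Suc n) powr (1/3)"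
    have a0: "0 < a" using False by (simp add: a_def)
    have ab: "a \<le> b" unfolding a_def b_def by (intro powr_mono2) auto
    have a3: "a ^ 3 = real n" using False by (simp add: a_def powr_power)
    have b3: "b ^ 3 = real n + 1" by (simp add: b_def powr_power)
    have b2: "real (Suc n) powr (-2/3) = 1 / b^2"
      by (simp add: b_def powr_power powr_minus_divide[symmetric] powr_minus)
    have "1 = b^3 - a^3" using a3 b3 by simp
    also have "\<dots> = (b - a) * (b^2 + a*b + a^2)" by (simp add: power2_eq_square power3_eq_cube algebra_simps)
    also have "\<dots> \<le> (b - a) * (3 * b^2)"
    proof -
      have h1: "a*b \<le> b*b" using ab a0 by (intro mult_right_mono) auto
      have h2: "a*a \<le> b*b" using ab a0 by (intro mult_mono) auto
      have "b^2 + a*b + a^2 \<le> 3*b^2" using h1 h2 by (simp add: power2_eq_square)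
      then show ?thesis using ab by (intro mult_left_mono) auto
    qed
    finally have "1 / b^2 \<le> 3 * (b - a)" using a0 ab by (simp add: field_simps)
    moreover have split: "(\<Sum>k=1..Suc n. real k powr (-2/3)) = (\<Sum>k=1..n. real k powr (-2/3)) + real (Suc n) powr (-2/3)"
      by (subst sum.nat_ivl_Suc') auto
    ultimately have "(\<Sum>k=1..Suc n. real k powr (-2/3)) \<le> 3 * a + 3 * (b - a)"
      using Suc.IH unfolding a_def[symmetric] b2[symmetric] by linarith
    then show ?thesis by (simp add: b_def)
  qed
qed simp

lemma const_alg:
  fixes n Ct B sigma delta tau :: real and k :: nat
  assumes k: "k \<ge> 1" and d: "delta > 0" and t: "tau > 0"
  shows "(n * Ct * (delta * real k powr (-1/6))^2)^2 / tau
         + 2 / (tau * real k) * (n / (delta * real k powr (-1/6)))^2 * (B^2 + sigma)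
       = (n^2 * Ct^2 * delta^4 / tau + 2 * n^2 * (B^2 + sigma) / (tau * delta^2)) * real k powr (-2/3)"
proof -
  define q where "q = real k powr (-1/6)"
  have kpos: "real k > 0" using k by simp
  have q0: "q > 0" using kpos by (simp add: q_def)
  have q4: "q^4 = real k powr (-2/3)" using kpos by (simp add: q_def powr_power)
  have kq2: "real k * q^2 = real k powr (2/3)"
  proof -
    have "real k powr (2/3) = real k powr (1 + (-1/3))" by simp
    also have "\<dots> = real k powr 1 * real k powr (-1/3)" by (rule powr_add)
    also have "\<dots> = real k * q^2" using kpos by (simp add: q_def powr_power)
    finally show ?thesis by simp
  qed
  have inv: "1 / (real k * q^2) = real k powr (-2/3)"
    unfolding kq2 by (simp add: powr_minus_divide)
  have "(n * Ct * (delta * q)^2)^2 / tau = n^2 * Ct^2 * delta^4 / tau * q^4"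
    by (simp add: power_mult_distrib field_simps)
  moreover have "2 / (tau * real k) * (n / (delta * q))^2 * (B^2 + sigma)
      = 2 * n^2 * (B^2 + sigma) / (tau * delta^2) * (1 / (real k * q^2))"
    using q0 kpos d t by (simp add: power_divide power_mult_distrib field_simps)
  ultimately show ?thesis unfolding q_def[symmetric] q4 inv by (simp add: algebra_simps)
qed

theorem mainTheorem3:
  fixes f :: "real^'n \<Rightarrow> real"
    and D K :: "(real^'n) set"
    and F :: "complex^'n \<Rightarrow> complex"
    and tau L2 dbar kappa delta sigma :: real
    and M :: "'a measure"
    and u :: "nat \<Rightarrow> 'a \<Rightarrow> real^'n"
    and xi :: "nat \<Rightarrow> 'a \<Rightarrow> real"
    and x :: "nat \<Rightarrow> 'a \<Rightarrow> real^'n"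
    and x1 xstar :: "real^'n"
  assumes D_open: "open D"
    and f_analytic: "real_analytic_vec_on f D"
    and tau_pos: "tau > 0"
    and f_sconv: "strongly_convex_on D tau f"
    and dbar: "0 < dbar" "dbar < 1"
    and F_holo: "holomorphic_vec_on F (strip D dbar)"
    and F_ext: "\<forall>z\<in>D. F (cvec z 0) = complex_of_real (f z)"
    and K_sub: "K \<subseteq> D" and K_compact: "compact K" and K_convex: "convex K"
    and L2_ne: "L2 \<noteq> 0"
    and hess_lip: "\<forall>y\<in>K. \<forall>z\<in>K. mat_norm2 (hessian f y - hessian f z) \<le> L2 * norm (y - z)"
    and kappa: "0 < kappa" "kappa < 1"
    and delta: "0 < delta" "delta \<le> kappa * dbar"
    and sigma_pos: "sigma > 0"
    and M_prob: "prob_space M"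
    and u_rv: "\<forall>k\<ge>1. u k \<in> borel_measurable M"
    and u_unif: "\<forall>k\<ge>1. distr M borel (u k) = uniform_sphere"
    and xi_rv: "\<forall>k\<ge>1. xi k \<in> borel_measurable M"
    and xi_int: "\<forall>k\<ge>1. integrable M (xi k)"
    and xi_mean: "\<forall>k\<ge>1. (\<integral>\<omega>. xi k \<omega> \<partial>M) = 0"
    and xi_sq_int: "\<forall>k\<ge>1. integrable M (\<lambda>\<omega>. (xi k \<omega>)\<^sup>2)"
    and xi_var: "\<forall>k\<ge>1. (\<integral>\<omega>. (xi k \<omega>)\<^sup>2 \<partial>M) \<le> sigma"
    and indep: "prob_space.indep_vars M (\<lambda>_. borel)
        (\<lambda>i \<omega>. case i of Inl k \<Rightarrow> (u k \<omega>, 0) | Inr k \<Rightarrow> (0, xi k \<omega>))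
        ({1..} <+> {1..})"
    and x1_in: "x1 \<in> K"
    and x_init: "\<forall>\<omega>. x 1 \<omega> = x1"
    and x_step: "\<forall>k\<ge>1. \<forall>\<omega>.
        x (Suc k) \<omega> = closest_point K
          (x k \<omega> - (2 / (tau * real k)) *\<^sub>R
             ((real CARD('n) / (delta * real k powr (-1/6))) *
               (Im (F (cvec (x k \<omega>) ((delta * real k powr (-1/6)) *\<^sub>R u k \<omega>))) + xi k \<omega>))
             *\<^sub>R u k \<omega>)"
    and xstar_min: "xstar \<in> K" "\<forall>y\<in>K. f xstar \<le> f y"
  shows "\<exists>C p. \<forall>Kn::nat\<ge>1.
     (\<integral>\<omega>. f ((1 / real Kn) *\<^sub>R (\<Sum>k=1..Kn. x k \<omega>)) - f xstar \<partial>M)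
       \<le> C * (1 + ln (real Kn)) ^ p *
          (real CARD('n) ^ 2 / tau * delta powr (-1/3) * sigma * real Kn powr (-2/3))"
proof -
  interpret P: prob_space M by (rule M_prob)
  let ?n = "real CARD('n)"
  define dk where "dk k = delta * real k powr (-1/6)" for k :: nat
  define cB where "cB = closest_point (cball (0::real^'n) 1)"
  define V where "V = (\<lambda>i \<omega>. case i of Inl k \<Rightarrow> (u k \<omega>, 0::real) | Inr k \<Rightarrow> (0::real^'n, xi k \<omega>))"
  define I where "I = ({1::nat..} <+> {1::nat..})"
  define x' where "x' k \<omega> = Psi K F tau delta x1 k (\<lambda>i. V i \<omega>)" for k \<omega>
  have Kne: "K \<noteq> {}" using x1_in by auto
  have Kcl: "closed K" using K_compact by (rule compact_imp_closed)
  have dl: "delta < dbar"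
  proof -
    have "kappa * dbar < 1 * dbar" using kappa dbar by (intro mult_strict_right_mono) auto
    then show ?thesis using delta by simp
  qed
  have x'K: "x' k \<omega> \<in> K" for k \<omega> unfolding x'_def by (rule Psi_K[OF x1_in Kcl Kne])
  have x'1: "x' 1 \<omega> = x1" for \<omega> by (simp add: x'_def)
  have x'Suc: "x' (Suc k) \<omega> = stepf K F tau delta k (x' k \<omega>) (u k \<omega>) (xi k \<omega>)" if "k \<ge> 1" for k \<omega>
    using that by (simp add: x'_def V_def)
  have cpK: "closest_point K (x' k \<omega>) = x' k \<omega>" for k \<omega> by (rule closest_point_self[OF x'K])
  have dk: "0 < dk k" "dk k \<le> delta" if "k \<ge> 1" for k using dk_bounds[OF that delta(1)] by (auto simp: dk_def)
  have cBn: "norm (cB b) \<le> 1" for b unfolding cB_def by (rule norm_cp_ball)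
  obtain Ct where taylor: "\<forall>x\<in>K. \<forall>y. norm y \<le> 1 \<longrightarrow> (\<forall>t. 0 < t \<and> t \<le> delta \<longrightarrow>
     \<bar>Im (F (cvec x (t *\<^sub>R y))) - t * Re (dF F (cvec x 0) (cvec y 0))\<bar> \<le> Ct * t^3)"
    using taylor_bound[OF D_open F_holo F_ext K_compact K_sub Kne delta(1) dl] by blast
  obtain B where B: "B > 0" "\<forall>a\<in>K. \<forall>b. norm b \<le> delta \<longrightarrow> cmod (F (cvec a b)) \<le> B"
    using F_bound[OF F_holo K_compact K_sub delta(1) dl] by blast
  have fcD: "continuous_on D f" by (rule f_cont[OF D_open F_holo dbar(1) F_ext])
  have fK: "continuous_on UNIV (\<lambda>x. f (closest_point K x))"
    by (rule continuous_on_compose2[OF fcD continuous_on_closest_point]) (use K_convex Kcl Kne K_sub closest_point_in_set in auto)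
  obtain Bf where Bf: "\<And>x. \<bar>f (closest_point K x)\<bar> \<le> Bf"
  proof -
    have "compact ((\<lambda>x. f (closest_point K x)) ` K)"
      by (rule compact_continuous_image[OF continuous_on_subset[OF fK] K_compact]) simp
    then obtain b where "\<forall>z\<in>(\<lambda>x. f (closest_point K x)) ` K. \<bar>z\<bar> \<le> b"
      using compact_imp_bounded bounded_real by blast
    then have "\<bar>f (closest_point K x)\<bar> \<le> b" for x
      using closest_point_in_set[OF Kcl Kne, of x] closest_point_self[of "closest_point K x" K]
      by (metis imageI)
    then show ?thesis using that by blast
  qed
  obtain Dm where Dm: "Dm > 0" "\<And>x. x \<in> K \<Longrightarrow> norm (x - xstar) \<le> Dm"
  proof -
    have "bounded ((\<lambda>x. x - xstar) ` K)" using K_compact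
      by (intro compact_imp_bounded compact_continuous_image continuous_intros) auto
    then obtain b where "b > 0" "\<forall>z\<in>(\<lambda>x. x - xstar) ` K. norm z \<le> b" using bounded_pos by blast
    then show ?thesis using that by blast
  qed
  have indV: "P.indep_vars (\<lambda>_. borel) V I" using indep by (simp add: V_def I_def)
  have fstm: "(fst :: (real^'n) \<times> real \<Rightarrow> real^'n) \<in> borel_measurable borel"
    by (rule borel_measurable_continuous_onI) (intro continuous_intros)
  have sndm: "(snd :: (real^'n) \<times> real \<Rightarrow> real) \<in> borel_measurable borel"
    by (rule borel_measurable_continuous_onI) (intro continuous_intros)
  have cBc: "continuous_on UNIV cB" unfolding cB_def by (rule continuous_on_closest_point) auto
  have cBm: "cB \<in> borel_measurable borel" by (rule borel_measurable_continuous_onI[OF cBc])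
  have comp: "(\<lambda>w::nat+nat \<Rightarrow> (real^'n) \<times> real. w i) \<in> Pi\<^sub>M A (\<lambda>_. borel) \<rightarrow>\<^sub>M borel" if "i \<in> A" for i A
    using measurable_component_singleton[OF that, of "\<lambda>_. borel"] by simp
  have indXU: "P.indep_var borel (x' k) borel (u k)" if k: "k \<ge> 1" for k
  proof -
    define A where "A = {1..<k} <+> {1..<k}"
    have r: "P.indep_var (Pi\<^sub>M A (\<lambda>_. borel)) (\<lambda>\<omega>. restrict (\<lambda>i. V i \<omega>) A)
                         (Pi\<^sub>M {Inl k} (\<lambda>_. borel)) (\<lambda>\<omega>. restrict (\<lambda>i. V i \<omega>) {Inl k})"
      by (rule P.indep_var_restrict[OF indV]) (use k in \<open>auto simp: A_def I_def\<close>)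
    have m1: "Psi K F tau delta x1 k \<in> borel_measurable (Pi\<^sub>M A (\<lambda>_. borel))"
      by (rule Psi_meas[OF F_holo K_convex Kcl Kne K_sub delta(1) dl]) (simp add: A_def)
    have m2: "(\<lambda>w::nat+nat \<Rightarrow> (real^'n) \<times> real. fst (w (Inl k))) \<in> borel_measurable (Pi\<^sub>M {Inl k} (\<lambda>_. borel))"
      using measurable_compose[OF comp[of "Inl k" "{Inl k}"] fstm] by simp
    have "P.indep_var borel (Psi K F tau delta x1 k \<circ> (\<lambda>\<omega>. restrict (\<lambda>i. V i \<omega>) A))
                      borel ((\<lambda>w. fst (w (Inl k))) \<circ> (\<lambda>\<omega>. restrict (\<lambda>i. V i \<omega>) {Inl k}))"
      by (rule P.indep_var_compose[OF r m1 m2])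
    moreover have "Psi K F tau delta x1 k \<circ> (\<lambda>\<omega>. restrict (\<lambda>i. V i \<omega>) A) = x' k"
      by (rule ext) (simp add: x'_def Psi_restrict A_def)
    moreover have "(\<lambda>w. fst (w (Inl k))) \<circ> (\<lambda>\<omega>. restrict (\<lambda>i. V i \<omega>) {Inl k}) = u k"
      by (rule ext) (simp add: V_def)
    ultimately show ?thesis by simp
  qed
  have indWZ: "P.indep_var borel (\<lambda>\<omega>. cB (u k \<omega>) \<bullet> (x' k \<omega> - xstar)) borel (xi k)" if k: "k \<ge> 1" for k
  proof -
    define A where "A = ({1..<k} <+> {1..<k}) \<union> {Inl k}"
    have r: "P.indep_var (Pi\<^sub>M A (\<lambda>_. borel)) (\<lambda>\<omega>. restrict (\<lambda>i. V i \<omega>) A)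
                         (Pi\<^sub>M {Inr k} (\<lambda>_. borel)) (\<lambda>\<omega>. restrict (\<lambda>i. V i \<omega>) {Inr k})"
      by (rule P.indep_var_restrict[OF indV]) (use k in \<open>auto simp: A_def I_def\<close>)
    have mP: "Psi K F tau delta x1 k \<in> borel_measurable (Pi\<^sub>M A (\<lambda>_. borel))"
      by (rule Psi_meas[OF F_holo K_convex Kcl Kne K_sub delta(1) dl]) (auto simp: A_def)
    have mU: "(\<lambda>w::nat+nat \<Rightarrow> (real^'n) \<times> real. fst (w (Inl k))) \<in> borel_measurable (Pi\<^sub>M A (\<lambda>_. borel))"
      using measurable_compose[OF comp[of "Inl k" A] fstm] by (simp add: A_def)
    have m1: "(\<lambda>w. cB (fst (w (Inl k))) \<bullet> (Psi K F tau delta x1 k w - xstar)) \<in> borel_measurable (Pi\<^sub>M A (\<lambda>_. borel))"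
      using measurable_compose[OF mU cBm] mP by measurable
    have m2: "(\<lambda>w::nat+nat \<Rightarrow> (real^'n) \<times> real. snd (w (Inr k))) \<in> borel_measurable (Pi\<^sub>M {Inr k} (\<lambda>_. borel))"
      using measurable_compose[OF comp[of "Inr k" "{Inr k}"] sndm] by simp
    have "P.indep_var borel ((\<lambda>w. cB (fst (w (Inl k))) \<bullet> (Psi K F tau delta x1 k w - xstar)) \<circ> (\<lambda>\<omega>. restrict (\<lambda>i. V i \<omega>) A))
                      borel ((\<lambda>w. snd (w (Inr k))) \<circ> (\<lambda>\<omega>. restrict (\<lambda>i. V i \<omega>) {Inr k}))"
      by (rule P.indep_var_compose[OF r m1 m2])
    moreover have "(\<lambda>w. cB (fst (w (Inl k))) \<bullet> (Psi K F tau delta x1 k w - xstar)) \<circ> (\<lambda>\<omega>. restrict (\<lambda>i. V i \<omega>) A)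
        = (\<lambda>\<omega>. cB (u k \<omega>) \<bullet> (x' k \<omega> - xstar))"
    proof (rule ext)
      fix \<omega>
      have "Psi K F tau delta x1 k (restrict (\<lambda>i. V i \<omega>) A) = x' k \<omega>"
        unfolding x'_def by (rule Psi_restrict) (auto simp: A_def)
      then show "((\<lambda>w. cB (fst (w (Inl k))) \<bullet> (Psi K F tau delta x1 k w - xstar)) \<circ> (\<lambda>\<omega>. restrict (\<lambda>i. V i \<omega>) A)) \<omega>
        = cB (u k \<omega>) \<bullet> (x' k \<omega> - xstar)" by (simp add: V_def A_def)
    qed
    moreover have "(\<lambda>w. snd (w (Inr k))) \<circ> (\<lambda>\<omega>. restrict (\<lambda>i. V i \<omega>) {Inr k}) = xi k"
      by (rule ext) (simp add: V_def)
    ultimately show ?thesis by simp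
  qed
  define a where "a k = (\<integral>\<omega>. (norm (x' k \<omega> - xstar))\<^sup>2 \<partial>M)" for k
  define Dk where "Dk k = (\<integral>\<omega>. f (x' k \<omega>) - f xstar \<partial>M)" for k
  define Ac where "Ac = ?n^2 * Ct^2 * delta^4 / tau + 2 * ?n^2 * (B^2 + sigma) / (tau * delta^2)"
  have step: "Dk k \<le> tau / 4 * ((real k - 1) * a k - real k * a (Suc k)) + Ac * real k powr (-2/3)"
    if k: "k \<ge> 1" for k
  proof -
    define d where "d = dk k"
    define c where "c = ?n / d"
    define m where "m = 2 / (tau * real k)"
    define b where "b = ?n * Ct * d^2"
    have d0: "0 < d" "d \<le> delta" using dk[OF k] by (auto simp: d_def)
    have c0: "c > 0" using d0 by (simp add: c_def)
    have m0: "m > 0" using tau_pos k by (simp add: m_def)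
    have Xm: "x' k \<in> borel_measurable M" using indXU[OF k] P.indep_var_rv1 by blast
    have Um: "u k \<in> borel_measurable M" using u_rv k by auto
    have Zm: "xi k \<in> borel_measurable M" using xi_rv k by auto
    define Fw where "Fw \<omega> = Im (F (cvec (x' k \<omega>) (d *\<^sub>R cB (u k \<omega>))))" for \<omega>
    define W where "W \<omega> = cB (u k \<omega>) \<bullet> (x' k \<omega> - xstar)" for \<omega>
    have FWc: "continuous_on UNIV (\<lambda>p::(real^'n) \<times> (real^'n). Im (F (cvec (closest_point K (fst p)) (d *\<^sub>R cB (snd p)))))"
      unfolding cB_def
      by (intro continuous_intros F_cont_comp[OF F_holo K_convex Kcl Kne K_sub d0(1)]) (use d0 dl in auto)
    have FWm: "(\<lambda>p::(real^'n) \<times> (real^'n). Im (F (cvec (closest_point K (fst p)) (d *\<^sub>R cB (snd p))))) \<in> borel_measurable borel"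
      by (rule borel_measurable_continuous_onI[OF FWc])
    have Fwm: "Fw \<in> borel_measurable M"
    proof -
      have "(\<lambda>\<omega>. (x' k \<omega>, u k \<omega>)) \<in> borel_measurable M" by (intro borel_measurable_Pair Xm Um)
      from measurable_compose[OF this FWm] show ?thesis unfolding Fw_def[abs_def] by (simp add: cpK)
    qed
    have FwB: "\<bar>Fw \<omega>\<bar> \<le> B" for \<omega>
    proof -
      have "norm (d *\<^sub>R cB (u k \<omega>)) \<le> delta"
        using cBn[of "u k \<omega>"] d0 by (simp add: mult_le_one order_trans[OF mult_left_le])
      then have "cmod (F (cvec (x' k \<omega>) (d *\<^sub>R cB (u k \<omega>)))) \<le> B" using B(2) x'K by blast
      then show ?thesis unfolding Fw_def using abs_Im_le_cmod order_trans by blast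
    qed
    have Wm: "W \<in> borel_measurable M" unfolding W_def using Xm measurable_compose[OF Um cBm] by measurable
    have WB: "\<bar>W \<omega>\<bar> \<le> Dm" for \<omega>
    proof -
      have "\<bar>W \<omega>\<bar> \<le> norm (cB (u k \<omega>)) * norm (x' k \<omega> - xstar)" unfolding W_def by (rule Cauchy_Schwarz_ineq2)
      also have "\<dots> \<le> 1 * Dm" using cBn Dm(2)[OF x'K] by (intro mult_mono) auto
      finally show ?thesis by simp
    qed
    have xS: "x' (Suc k) \<omega> = closest_point K (x' k \<omega> - m *\<^sub>R ((c * (Fw \<omega> + xi k \<omega>)) *\<^sub>R cB (u k \<omega>)))" for \<omega>
      using x'Suc[OF k, of \<omega>] by (simp add: stepf_def cpK d_def dk_def c_def m_def Fw_def cB_def)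
    have P1: "(norm (x' (Suc k) \<omega> - xstar))\<^sup>2 \<le> (norm (x' k \<omega> - xstar))\<^sup>2 - 2*m*c*(Fw \<omega> * W \<omega>)
        - 2*m*c*(xi k \<omega> * W \<omega>) + 2*m^2*c^2*(B^2 + (xi k \<omega>)^2)" for \<omega>
    proof -
      define G where "G = (c * (Fw \<omega> + xi k \<omega>)) *\<^sub>R cB (u k \<omega>)"
      define w where "w = x' k \<omega> - xstar"
      have "dist (x' (Suc k) \<omega>) (closest_point K xstar) \<le> dist (x' k \<omega> - m *\<^sub>R G) xstar"
        unfolding xS G_def by (rule closest_point_lipschitz[OF K_convex Kcl Kne])
      then have n1: "norm (x' (Suc k) \<omega> - xstar) \<le> norm (w - m *\<^sub>R G)"
        by (simp add: closest_point_self[OF xstar_min(1)] dist_norm w_def algebra_simps)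
      have n2: "(norm (w - m *\<^sub>R G))\<^sup>2 = (norm w)\<^sup>2 - 2*m*(G \<bullet> w) + m^2 * (norm G)\<^sup>2"
        unfolding power2_norm_eq_inner by (simp add: inner_diff_left inner_diff_right inner_commute power2_eq_square algebra_simps)
      have Gw: "G \<bullet> w = c * (Fw \<omega> + xi k \<omega>) * W \<omega>" by (simp add: G_def W_def w_def)
      have GG: "(norm G)\<^sup>2 \<le> 2*c^2*(B^2 + (xi k \<omega>)^2)"
      proof -
        have "(norm G)\<^sup>2 = (c * (Fw \<omega> + xi k \<omega>))^2 * (norm (cB (u k \<omega>)))\<^sup>2"
          by (simp add: G_def power_mult_distrib)
        also have "\<dots> \<le> (c * (Fw \<omega> + xi k \<omega>))^2 * 1"
          using cBn[of "u k \<omega>"] by (intro mult_left_mono) (auto simp: power_le_one)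
        also have "\<dots> = c^2 * (Fw \<omega> + xi k \<omega>)^2" by (simp add: power_mult_distrib)
        also have "\<dots> \<le> c^2 * (2 * (Fw \<omega>)^2 + 2 * (xi k \<omega>)^2)"
        proof -
          have "(Fw \<omega> + xi k \<omega>)^2 \<le> 2 * (Fw \<omega>)^2 + 2 * (xi k \<omega>)^2"
            using sum_squares_ge_zero[of "Fw \<omega> - xi k \<omega>" 0] by (simp add: power2_eq_square algebra_simps)
          then show ?thesis by (intro mult_left_mono) auto
        qed
        also have "\<dots> \<le> c^2 * (2 * B^2 + 2 * (xi k \<omega>)^2)"
        proof -
          have "\<bar>Fw \<omega>\<bar>^2 \<le> B^2" using FwB[of \<omega>] by (intro power_mono) auto
          then have "(Fw \<omega>)^2 \<le> B^2" by simp
          then show ?thesis by (intro mult_left_mono) auto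
        qed
        finally show ?thesis by (simp add: algebra_simps)
      qed
      have "(norm (x' (Suc k) \<omega> - xstar))\<^sup>2 \<le> (norm (w - m *\<^sub>R G))\<^sup>2"
        using n1 by (intro power_mono) auto
      also have "\<dots> \<le> (norm w)\<^sup>2 - 2*m*(G \<bullet> w) + m^2 * (2*c^2*(B^2 + (xi k \<omega>)^2))"
        unfolding n2 using GG by (intro add_left_mono mult_left_mono) auto
      finally have fin: "(norm (x' (Suc k) \<omega> - xstar))\<^sup>2 \<le> (norm w)\<^sup>2 - 2*m*(G \<bullet> w) + m^2 * (2*c^2*(B^2 + (xi k \<omega>)^2))" .
      note fin2 = fin[unfolded Gw]
      show ?thesis using fin2 by (simp add: w_def algebra_simps)
    qed
    have x'm: "x' j \<in> borel_measurable M" if "j \<ge> 1" for j using indXU[OF that] P.indep_var_rv1 by blast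
    have intN: "integrable M (\<lambda>\<omega>. (norm (x' j \<omega> - xstar))\<^sup>2)" if "j \<ge> 1" for j
    proof (rule P.integrable_const_bound[of _ "Dm^2"])
      show "AE \<omega> in M. norm ((norm (x' j \<omega> - xstar))\<^sup>2) \<le> Dm^2"
        using Dm(2)[OF x'K] by (auto intro!: power_mono)
    qed (use x'm[OF that] in measurable)
    have intFW: "integrable M (\<lambda>\<omega>. Fw \<omega> * W \<omega>)"
    proof (rule P.integrable_const_bound[of _ "B * Dm"])
      have "norm (Fw \<omega> * W \<omega>) \<le> B * Dm" for \<omega>
        using FwB[of \<omega>] WB[of \<omega>] by (simp add: abs_mult mult_mono)
      then show "AE \<omega> in M. norm (Fw \<omega> * W \<omega>) \<le> B * Dm" by simp
    qed (use Fwm Wm in measurable)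
    have intZ: "integrable M (xi k)" using xi_int k by auto
    have intZ2: "integrable M (\<lambda>\<omega>. (xi k \<omega>)\<^sup>2)" using xi_sq_int k by auto
    have intW: "integrable M W"
      by (rule P.integrable_const_bound[of _ Dm]) (use WB Wm in auto)
    have intZW: "integrable M (\<lambda>\<omega>. xi k \<omega> * W \<omega>)"
    proof (rule Bochner_Integration.integrable_bound[OF integrable_mult_right[OF intZ, of Dm]])
      show "(\<lambda>\<omega>. xi k \<omega> * W \<omega>) \<in> borel_measurable M" using Zm Wm by measurable
      have "norm (xi k \<omega> * W \<omega>) \<le> norm (Dm * xi k \<omega>)" for \<omega>
        using WB[of \<omega>] Dm(1) by (simp add: abs_mult mult.commute mult_right_mono)
      then show "AE \<omega> in M. norm (xi k \<omega> * W \<omega>) \<le> norm (Dm * xi k \<omega>)" by simp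
    qed
    have intR: "integrable M (\<lambda>\<omega>. (norm (x' k \<omega> - xstar))\<^sup>2 - 2*m*c*(Fw \<omega> * W \<omega>)
        - 2*m*c*(xi k \<omega> * W \<omega>) + 2*m^2*c^2*(B^2 + (xi k \<omega>)^2))"
      using intN[OF k] intFW intZW intZ2 by auto
    have I1: "a (Suc k) \<le> (\<integral>\<omega>. (norm (x' k \<omega> - xstar))\<^sup>2 - 2*m*c*(Fw \<omega> * W \<omega>)
        - 2*m*c*(xi k \<omega> * W \<omega>) + 2*m^2*c^2*(B^2 + (xi k \<omega>)^2) \<partial>M)"
      unfolding a_def by (rule integral_mono[OF intN intR P1]) simp
    have I2: "(\<integral>\<omega>. (norm (x' k \<omega> - xstar))\<^sup>2 - 2*m*c*(Fw \<omega> * W \<omega>)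
        - 2*m*c*(xi k \<omega> * W \<omega>) + 2*m^2*c^2*(B^2 + (xi k \<omega>)^2) \<partial>M)
      = a k - 2*m*c*(\<integral>\<omega>. Fw \<omega> * W \<omega> \<partial>M) - 2*m*c*(\<integral>\<omega>. xi k \<omega> * W \<omega> \<partial>M)
        + 2*m^2*c^2*(B^2 + (\<integral>\<omega>. (xi k \<omega>)\<^sup>2 \<partial>M))"
      using intN[OF k] intFW intZW intZ2 P.prob_space by (simp add: a_def)
    have I3: "(\<integral>\<omega>. xi k \<omega> * W \<omega> \<partial>M) = 0"
    proof -
      have "(\<integral>\<omega>. W \<omega> * xi k \<omega> \<partial>M) = (\<integral>\<omega>. W \<omega> \<partial>M) * (\<integral>\<omega>. xi k \<omega> \<partial>M)"
        by (rule P.indep_var_lebesgue_integral[OF indWZ[OF k, folded W_def[abs_def]] intW intZ])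
      then show ?thesis using xi_mean k by (simp add: mult.commute)
    qed
    have I4: "(\<integral>\<omega>. (xi k \<omega>)\<^sup>2 \<partial>M) \<le> sigma" using xi_var k by auto
    define H where "H p = c * Im (F (cvec (closest_point K (fst p)) (d *\<^sub>R cB (snd p)))) *
        (cB (snd p) \<bullet> (closest_point K (fst p) - xstar))" for p :: "(real^'n) \<times> (real^'n)"
    define L where "L x = f (closest_point K x) - f xstar + tau/2 * (norm (closest_point K x - xstar))\<^sup>2
        - b * norm (closest_point K x - xstar)" for x
    have cpKc: "continuous_on UNIV (closest_point K)" by (rule continuous_on_closest_point) (use K_convex Kcl Kne in auto)
    have cpKin: "closest_point K z \<in> K" for z by (rule closest_point_in_set[OF Kcl Kne])
    have Hc: "continuous_on UNIV H" unfolding H_def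
      by (intro continuous_intros FWc continuous_on_compose2[OF cBc] continuous_on_compose2[OF cpKc]) auto
    have Hm: "H \<in> borel_measurable borel" by (rule borel_measurable_continuous_onI[OF Hc])
    have Hb: "\<bar>H p\<bar> \<le> c * B * Dm" for p
    proof -
      have "norm (d *\<^sub>R cB (snd p)) \<le> delta"
        using cBn[of "snd p"] d0 by (simp add: mult_le_one order_trans[OF mult_left_le])
      then have "cmod (F (cvec (closest_point K (fst p)) (d *\<^sub>R cB (snd p)))) \<le> B" using B(2) cpKin by blast
      then have h1: "\<bar>Im (F (cvec (closest_point K (fst p)) (d *\<^sub>R cB (snd p))))\<bar> \<le> B"
        using abs_Im_le_cmod order_trans by blast
      have "\<bar>cB (snd p) \<bullet> (closest_point K (fst p) - xstar)\<bar> \<le> norm (cB (snd p)) * norm (closest_point K (fst p) - xstar)"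
        by (rule Cauchy_Schwarz_ineq2)
      also have "\<dots> \<le> 1 * Dm" using cBn Dm(2)[OF cpKin] by (intro mult_mono) auto
      finally have h2: "\<bar>cB (snd p) \<bullet> (closest_point K (fst p) - xstar)\<bar> \<le> Dm" by simp
      have "\<bar>H p\<bar> = c * (\<bar>Im (F (cvec (closest_point K (fst p)) (d *\<^sub>R cB (snd p))))\<bar> *
          \<bar>cB (snd p) \<bullet> (closest_point K (fst p) - xstar)\<bar>)"
        using c0 by (simp add: H_def abs_mult)
      also have "\<dots> \<le> c * (B * Dm)" using h1 h2 c0 by (intro mult_left_mono mult_mono) auto
      finally show ?thesis by simp
    qed
    have Lc: "continuous_on UNIV L" unfolding L_def
      by (intro continuous_intros fK continuous_on_compose2[OF cpKc]) auto
    have Lm: "L \<in> borel_measurable borel" by (rule borel_measurable_continuous_onI[OF Lc])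
    have Lb: "\<bar>L x\<bar> \<le> Bf + \<bar>f xstar\<bar> + tau/2 * Dm^2 + \<bar>b\<bar> * Dm" for x
    proof -
      have n: "norm (closest_point K x - xstar) \<le> Dm" by (rule Dm(2)[OF cpKin])
      have "(norm (closest_point K x - xstar))\<^sup>2 \<le> Dm^2" using n by (intro power_mono) auto
      then have t1: "\<bar>tau/2 * (norm (closest_point K x - xstar))\<^sup>2\<bar> \<le> tau/2 * Dm^2" using tau_pos by simp
      have t2: "\<bar>b * norm (closest_point K x - xstar)\<bar> \<le> \<bar>b\<bar> * Dm" using n by (simp add: abs_mult mult_left_mono)
      show ?thesis using t1 t2 Bf[of x] unfolding L_def by linarith
    qed
    have low: "L x \<le> (\<integral>y. H (x, y) \<partial>distr M borel (u k))" if x: "x \<in> K" for x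
    proof -
      have xD: "x \<in> D" using x K_sub by auto
      define gr where "gr = grad f x"
      define w where "w = x - xstar"
      have cpx: "closest_point K x = x" by (rule closest_point_self[OF x])
      have du: "distr M borel (u k) = uniform_sphere" using u_unif k by auto
      have AEl: "AE y in uniform_sphere. ?n * ((gr \<bullet> y) * (y \<bullet> w)) - b * norm w \<le> H (x, y)"
        using AE_sphere_norm
      proof eventually_elim
        case (elim y)
        have cy: "cB y = y" unfolding cB_def using elim by (intro closest_point_self) auto
        have ty: "\<bar>Im (F (cvec x (d *\<^sub>R y))) - d * (gr \<bullet> y)\<bar> \<le> Ct * d^3"
          using taylor x elim d0 grad_inner[OF D_open F_holo dbar(1) F_ext xD, of y] by (auto simp: gr_def)
        define r where "r = Im (F (cvec x (d *\<^sub>R y))) - d * (gr \<bullet> y)"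
        have Hxy: "H (x, y) = ?n * ((gr \<bullet> y) * (y \<bullet> w)) + c * r * (y \<bullet> w)"
          using d0 by (simp add: H_def cpx cy r_def w_def c_def algebra_simps)
        have yw: "\<bar>y \<bullet> w\<bar> \<le> norm w" using Cauchy_Schwarz_ineq2[of y w] elim by simp
        have "\<bar>c * r * (y \<bullet> w)\<bar> \<le> c * (Ct * d^3) * norm w"
          using ty yw c0 by (simp add: abs_mult r_def mult_mono mult_left_mono)
        also have "c * (Ct * d^3) * norm w = b * norm w"
          using d0 by (simp add: c_def b_def power3_eq_cube power2_eq_square)
        finally show ?case unfolding Hxy by linarith
      qed
      have int0: "integrable uniform_sphere (\<lambda>y. (gr \<bullet> y) * (y \<bullet> w))"
      proof (rule integrable_sphere[of _ "norm gr * norm w"])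
        show "(\<lambda>y. (gr \<bullet> y) * (y \<bullet> w)) \<in> borel_measurable borel" by measurable
        show "AE y in uniform_sphere. norm ((gr \<bullet> y) * (y \<bullet> w)) \<le> norm gr * norm w"
          using AE_sphere_norm
        proof eventually_elim
          case (elim y)
          have "\<bar>gr \<bullet> y\<bar> \<le> norm gr" using Cauchy_Schwarz_ineq2[of gr y] elim by simp
          moreover have "\<bar>y \<bullet> w\<bar> \<le> norm w" using Cauchy_Schwarz_ineq2[of y w] elim by simp
          ultimately show ?case by (simp add: abs_mult mult_mono)
        qed
      qed
      have i1: "integrable uniform_sphere (\<lambda>y. ?n * ((gr \<bullet> y) * (y \<bullet> w)))"
        by (rule integrable_mult_right[OF int0])
      have i2: "integrable uniform_sphere (\<lambda>y::real^'n. b * norm w)"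
        by (rule integrable_sphere[of _ "\<bar>b * norm w\<bar>"]) auto
      have int1: "integrable uniform_sphere (\<lambda>y. ?n * ((gr \<bullet> y) * (y \<bullet> w)) - b * norm w)"
        by (rule Bochner_Integration.integrable_diff[OF i1 i2])
      have int2: "integrable uniform_sphere (\<lambda>y. H (x, y))"
        by (rule integrable_sphere[of _ "c * B * Dm"]) (use Hm Hb in auto)
      have "(\<integral>y. ?n * ((gr \<bullet> y) * (y \<bullet> w)) - b * norm w \<partial>uniform_sphere) = gr \<bullet> w - b * norm w"
      proof -
        have "(\<integral>y. ?n * ((gr \<bullet> y) * (y \<bullet> w)) - b * norm w \<partial>uniform_sphere)
            = ?n * (\<integral>y. (gr \<bullet> y) * (y \<bullet> w) \<partial>uniform_sphere) - (\<integral>y. b * norm w \<partial>(uniform_sphere :: (real^'n) measure))"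
          using i1 i2 by simp
        also have "(\<integral>y. b * norm w \<partial>(uniform_sphere :: (real^'n) measure)) = b * norm w"
          by simp
        also have "(\<integral>y. (gr \<bullet> y) * (y \<bullet> w) \<partial>uniform_sphere) = (gr \<bullet> w) / ?n" by (rule sphere_quad)
        finally show ?thesis by simp
      qed
      moreover have "(\<integral>y. ?n * ((gr \<bullet> y) * (y \<bullet> w)) - b * norm w \<partial>uniform_sphere) \<le> (\<integral>y. H (x, y) \<partial>uniform_sphere)"
        by (rule integral_mono_AE[OF int1 int2 AEl])
      moreover have "L x \<le> gr \<bullet> w - b * norm w"
      proof -
        have "f xstar \<ge> f x + grad f x \<bullet> (xstar - x) + tau / 2 * (norm (xstar - x))\<^sup>2"
          using f_sconv xD xstar_min(1) K_sub unfolding strongly_convex_on_def by blast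
        moreover have "norm (xstar - x) = norm w" by (simp add: w_def norm_minus_commute)
        moreover have "grad f x \<bullet> (xstar - x) = - (gr \<bullet> w)" by (simp add: gr_def w_def inner_diff_right)
        ultimately show ?thesis by (simp add: L_def cpx w_def)
      qed
      ultimately show ?thesis using du by simp
    qed
    have I5: "(\<integral>\<omega>. L (x' k \<omega>) \<partial>M) \<le> (\<integral>\<omega>. H (x' k \<omega>, u k \<omega>) \<partial>M)"
      by (rule indep_expect_lower[OF M_prob indXU[OF k] Hm Hb Lm Lb low x'K])
    have I6: "(\<integral>\<omega>. H (x' k \<omega>, u k \<omega>) \<partial>M) = c * (\<integral>\<omega>. Fw \<omega> * W \<omega> \<partial>M)"
      by (simp add: H_def cpK Fw_def W_def mult.assoc)
    have fxm: "(\<lambda>\<omega>. f (x' k \<omega>)) \<in> borel_measurable M"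
    proof -
      have "(\<lambda>x. f (closest_point K x)) \<in> borel_measurable borel" by (rule borel_measurable_continuous_onI[OF fK])
      from measurable_compose[OF Xm this] show ?thesis by (simp add: cpK)
    qed
    have intf: "integrable M (\<lambda>\<omega>. f (x' k \<omega>))"
    proof (rule P.integrable_const_bound[of _ Bf])
      show "AE \<omega> in M. norm (f (x' k \<omega>)) \<le> Bf" using Bf[of "x' k _"] by (simp add: cpK)
    qed (rule fxm)
    have I7: "Dk k + tau/4 * a k - b^2/tau \<le> (\<integral>\<omega>. L (x' k \<omega>) \<partial>M)"
    proof -
      have pw: "f (x' k \<omega>) - f xstar + tau/4 * (norm (x' k \<omega> - xstar))\<^sup>2 - b^2/tau \<le> L (x' k \<omega>)" for \<omega>
      proof -
        define r where "r = norm (x' k \<omega> - xstar)"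
        have "0 \<le> (tau * r / 2 - b)^2 / tau" using tau_pos by simp
        also have "(tau * r / 2 - b)^2 / tau = tau/4 * r^2 - b * r + b^2/tau"
          using tau_pos by (simp add: power2_eq_square field_simps)
        finally have "b * r \<le> tau/4 * r^2 + b^2/tau" by simp
        then show ?thesis by (simp add: L_def cpK r_def[symmetric] algebra_simps)
      qed
      have intlow: "integrable M (\<lambda>\<omega>. f (x' k \<omega>) - f xstar + tau/4 * (norm (x' k \<omega> - xstar))\<^sup>2 - b^2/tau)"
        using intf intN[OF k] by auto
      have intL: "integrable M (\<lambda>\<omega>. L (x' k \<omega>))"
        by (rule P.integrable_const_bound[of _ "Bf + \<bar>f xstar\<bar> + tau/2 * Dm^2 + \<bar>b\<bar> * Dm"])
           (use Lb measurable_compose[OF Xm Lm] in auto)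
      have "(\<integral>\<omega>. f (x' k \<omega>) - f xstar + tau/4 * (norm (x' k \<omega> - xstar))\<^sup>2 - b^2/tau \<partial>M) \<le> (\<integral>\<omega>. L (x' k \<omega>) \<partial>M)"
        by (rule integral_mono[OF intlow intL pw])
      moreover have "(\<integral>\<omega>. f (x' k \<omega>) - f xstar + tau/4 * (norm (x' k \<omega> - xstar))\<^sup>2 - b^2/tau \<partial>M)
          = Dk k + tau/4 * a k - b^2/tau"
        using intf intN[OF k] P.prob_space by (simp add: Dk_def a_def)
      ultimately show ?thesis by simp
    qed
    have main: "a (Suc k) \<le> a k - 2*m*(Dk k + tau/4 * a k - b^2/tau) + 2*m^2*c^2*(B^2 + sigma)"
    proof -
      have "c * (\<integral>\<omega>. Fw \<omega> * W \<omega> \<partial>M) \<ge> Dk k + tau/4 * a k - b^2/tau" using I5 I6 I7 by simp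
      then have "2*m*c*(\<integral>\<omega>. Fw \<omega> * W \<omega> \<partial>M) \<ge> 2*m*(Dk k + tau/4 * a k - b^2/tau)"
        using m0 by (simp add: mult.assoc mult_left_mono)
      moreover have "2*m^2*c^2*(B^2 + (\<integral>\<omega>. (xi k \<omega>)\<^sup>2 \<partial>M)) \<le> 2*m^2*c^2*(B^2 + sigma)"
        using I4 by (intro mult_left_mono) auto
      moreover have "a (Suc k) \<le> a k - 2*m*c*(\<integral>\<omega>. Fw \<omega> * W \<omega> \<partial>M) + 2*m^2*c^2*(B^2 + (\<integral>\<omega>. (xi k \<omega>)\<^sup>2 \<partial>M))"
        using I1 I2 I3 by simp
      ultimately show ?thesis by linarith
    qed
    have "Dk k \<le> tau / 4 * ((real k - 1) * a k - real k * a (Suc k)) + (b^2 / tau + m * c^2 * (B^2 + sigma))"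
    proof -
      have "2*m*Dk k \<le> a k - a (Suc k) - m*tau/2 * a k + 2*m*(b^2/tau + m*c^2*(B^2 + sigma))"
        using main by (simp add: algebra_simps power2_eq_square)
      then have "Dk k \<le> (a k - a (Suc k) - m*tau/2 * a k) / (2*m) + (b^2/tau + m*c^2*(B^2 + sigma))"
        using m0 by (simp add: field_simps)
      also have "(a k - a (Suc k) - m*tau/2 * a k) / (2*m) = tau / 4 * ((real k - 1) * a k - real k * a (Suc k))"
        using tau_pos k by (simp add: m_def field_simps)
      finally show ?thesis .
    qed
    also have "b^2 / tau + m * c^2 * (B^2 + sigma) = Ac * real k powr (-2/3)"
      unfolding Ac_def b_def m_def c_def d_def dk_def by (rule const_alg[OF k delta(1) tau_pos])
    finally show ?thesis .
  qed
  have a_nn: "a k \<ge> 0" for k unfolding a_def by (rule integral_nonneg_AE) auto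
  have Ac_nn: "Ac \<ge> 0" using tau_pos delta(1) B(1) sigma_pos by (simp add: Ac_def)
  have tele: "(\<Sum>k=1..n. tau / 4 * ((real k - 1) * a k - real k * a (Suc k))) = - tau/4 * real n * a (Suc n)" for n
  proof (induction n)
    case (Suc n)
    have "(\<Sum>k=1..Suc n. tau / 4 * ((real k - 1) * a k - real k * a (Suc k)))
        = (\<Sum>k=1..n. tau / 4 * ((real k - 1) * a k - real k * a (Suc k))) + tau / 4 * ((real (Suc n) - 1) * a (Suc n) - real (Suc n) * a (Suc (Suc n)))"
      by (subst sum.nat_ivl_Suc') auto
    also have "\<dots> = - tau/4 * real n * a (Suc n) + tau / 4 * ((real (Suc n) - 1) * a (Suc n) - real (Suc n) * a (Suc (Suc n)))"
      by (simp only: Suc.IH)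
    also have "\<dots> = - tau/4 * real (Suc n) * a (Suc (Suc n))" by (simp add: algebra_simps)
    finally show ?case .
  qed simp
  have sumD: "(\<Sum>k=1..n. Dk k) \<le> 3 * Ac * real n powr (1/3)" for n
  proof -
    have "(\<Sum>k=1..n. Dk k) \<le> (\<Sum>k=1..n. tau / 4 * ((real k - 1) * a k - real k * a (Suc k)) + Ac * real k powr (-2/3))"
      by (intro sum_mono step) auto
    also have "\<dots> = (\<Sum>k=1..n. tau / 4 * ((real k - 1) * a k - real k * a (Suc k))) + (\<Sum>k=1..n. Ac * real k powr (-2/3))"
      by (rule sum.distrib)
    also have "\<dots> = - tau/4 * real n * a (Suc n) + Ac * (\<Sum>k=1..n. real k powr (-2/3))"
      by (simp only: tele sum_distrib_left)
    also have "\<dots> \<le> 0 + Ac * (3 * real n powr (1/3))"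
      using tau_pos a_nn[of "Suc n"] Ac_nn sum_powr_bound[of n]
      by (intro add_mono mult_left_mono) (auto intro!: mult_nonneg_nonneg simp: mult_nonpos_nonneg)
    finally show ?thesis by simp
  qed
  have x'm: "x' j \<in> borel_measurable M" if "j \<ge> 1" for j using indXU[OF that] P.indep_var_rv1 by blast
  have fKm: "(\<lambda>x. f (closest_point K x)) \<in> borel_measurable borel" by (rule borel_measurable_continuous_onI[OF fK])
  have intf: "integrable M (\<lambda>\<omega>. f (x' j \<omega>))" if j: "j \<ge> 1" for j
  proof (rule P.integrable_const_bound[of _ Bf])
    show "AE \<omega> in M. norm (f (x' j \<omega>)) \<le> Bf" using Bf[of "x' j _"] by (simp add: cpK)
    show "(\<lambda>\<omega>. f (x' j \<omega>)) \<in> borel_measurable M"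
      using measurable_compose[OF x'm[OF j] fKm] by (simp add: cpK)
  qed
  have avgK: "(1 / real Kn) *\<^sub>R (\<Sum>k=1..Kn. x' k \<omega>) \<in> K" if Kn: "Kn \<ge> 1" for Kn \<omega>
  proof -
    have "(\<Sum>k=1..Kn. (1 / real Kn) *\<^sub>R x' k \<omega>) \<in> K"
      by (rule convex_sum[OF _ K_convex]) (use Kn x'K in auto)
    then show ?thesis by (simp add: scaleR_sum_right)
  qed
  have jensen: "f ((1 / real Kn) *\<^sub>R (\<Sum>k=1..Kn. x' k \<omega>)) \<le> (1 / real Kn) * (\<Sum>k=1..Kn. f (x' k \<omega>))"
    if Kn: "Kn \<ge> 1" for Kn \<omega>
  proof -
    define z where "z = (1 / real Kn) *\<^sub>R (\<Sum>k=1..Kn. x' k \<omega>)"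
    have zK: "z \<in> K" unfolding z_def by (rule avgK[OF Kn])
    have each: "f z + grad f z \<bullet> (x' k \<omega> - z) \<le> f (x' k \<omega>)" for k
    proof -
      have "f (x' k \<omega>) \<ge> f z + grad f z \<bullet> (x' k \<omega> - z) + tau / 2 * (norm (x' k \<omega> - z))\<^sup>2"
        using f_sconv zK x'K K_sub unfolding strongly_convex_on_def by blast
      moreover have "tau / 2 * (norm (x' k \<omega> - z))\<^sup>2 \<ge> 0" using tau_pos by simp
      ultimately show ?thesis by linarith
    qed
    have "(\<Sum>k=1..Kn. f z + grad f z \<bullet> (x' k \<omega> - z)) \<le> (\<Sum>k=1..Kn. f (x' k \<omega>))"
      by (intro sum_mono each)
    moreover have "(\<Sum>k=1..Kn. f z + grad f z \<bullet> (x' k \<omega> - z)) = real Kn * f z"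
    proof -
      have "(\<Sum>k=1..Kn. x' k \<omega> - z) = (\<Sum>k=1..Kn. x' k \<omega>) - (\<Sum>k=1..Kn. z)"
        by (rule sum_subtractf)
      also have "(\<Sum>k=1..Kn. z) = real Kn *\<^sub>R z" by (subst sum_constant_scaleR) simp
      also have "real Kn *\<^sub>R z = (\<Sum>k=1..Kn. x' k \<omega>)"
        using Kn by (simp add: z_def scaleR_scaleR)
      also have "(\<Sum>k=1..Kn. x' k \<omega>) - (\<Sum>k=1..Kn. x' k \<omega>) = 0" by simp
      finally have "(\<Sum>k=1..Kn. grad f z \<bullet> (x' k \<omega> - z)) = 0"
        by (simp add: inner_sum_right[symmetric])
      then show ?thesis by (simp add: sum.distrib)
    qed
    ultimately have "real Kn * f z \<le> (\<Sum>k=1..Kn. f (x' k \<omega>))" by simp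
    then show ?thesis using Kn by (simp add: z_def field_simps)
  qed
  have bound': "(\<integral>\<omega>. f ((1 / real Kn) *\<^sub>R (\<Sum>k=1..Kn. x' k \<omega>)) - f xstar \<partial>M) \<le> 3 * Ac * real Kn powr (-2/3)"
    if Kn: "Kn \<ge> 1" for Kn
  proof -
    have avgm: "(\<lambda>\<omega>. (1 / real Kn) *\<^sub>R (\<Sum>k=1..Kn. x' k \<omega>)) \<in> borel_measurable M"
      using x'm by (intro borel_measurable_scaleR borel_measurable_const borel_measurable_sum) auto
    have intg: "integrable M (\<lambda>\<omega>. f ((1 / real Kn) *\<^sub>R (\<Sum>k=1..Kn. x' k \<omega>)) - f xstar)"
    proof (rule P.integrable_const_bound[of _ "Bf + \<bar>f xstar\<bar>"])
      have "norm (f ((1 / real Kn) *\<^sub>R (\<Sum>k=1..Kn. x' k \<omega>)) - f xstar) \<le> Bf + \<bar>f xstar\<bar>" for \<omega>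
      proof -
        have "\<bar>f ((1 / real Kn) *\<^sub>R (\<Sum>k=1..Kn. x' k \<omega>))\<bar> \<le> Bf"
          using Bf[of "(1 / real Kn) *\<^sub>R (\<Sum>k=1..Kn. x' k \<omega>)"] closest_point_self[OF avgK[OF Kn, of \<omega>]] by simp
        then show ?thesis by simp
      qed
      then show "AE \<omega> in M. norm (f ((1 / real Kn) *\<^sub>R (\<Sum>k=1..Kn. x' k \<omega>)) - f xstar) \<le> Bf + \<bar>f xstar\<bar>"
        by simp
      show "(\<lambda>\<omega>. f ((1 / real Kn) *\<^sub>R (\<Sum>k=1..Kn. x' k \<omega>)) - f xstar) \<in> borel_measurable M"
      proof -
        have "(\<lambda>\<omega>. f (closest_point K ((1 / real Kn) *\<^sub>R (\<Sum>k=1..Kn. x' k \<omega>)))) \<in> borel_measurable M"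
          using measurable_compose[OF avgm fKm] by simp
        then have "(\<lambda>\<omega>. f ((1 / real Kn) *\<^sub>R (\<Sum>k=1..Kn. x' k \<omega>))) \<in> borel_measurable M"
          by (simp only: closest_point_self[OF avgK[OF Kn]])
        then show ?thesis by measurable
      qed
    qed
    have inth: "integrable M (\<lambda>\<omega>. (1 / real Kn) * (\<Sum>k=1..Kn. f (x' k \<omega>) - f xstar))"
      using intf by (intro integrable_mult_right Bochner_Integration.integrable_sum Bochner_Integration.integrable_diff) auto
    have "(\<integral>\<omega>. f ((1 / real Kn) *\<^sub>R (\<Sum>k=1..Kn. x' k \<omega>)) - f xstar \<partial>M)
        \<le> (\<integral>\<omega>. (1 / real Kn) * (\<Sum>k=1..Kn. f (x' k \<omega>) - f xstar) \<partial>M)"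
    proof (rule integral_mono[OF intg inth])
      fix \<omega>
      have "(1 / real Kn) * (\<Sum>k=1..Kn. f (x' k \<omega>) - f xstar) = (1 / real Kn) * (\<Sum>k=1..Kn. f (x' k \<omega>)) - f xstar"
        using Kn by (simp add: sum_subtractf field_simps)
      then show "f ((1 / real Kn) *\<^sub>R (\<Sum>k=1..Kn. x' k \<omega>)) - f xstar \<le> (1 / real Kn) * (\<Sum>k=1..Kn. f (x' k \<omega>) - f xstar)"
        using jensen[OF Kn, of \<omega>] by simp
    qed
    also have "\<dots> = (1 / real Kn) * (\<Sum>k=1..Kn. Dk k)"
    proof -
      have "(\<integral>\<omega>. (\<Sum>k=1..Kn. f (x' k \<omega>) - f xstar) \<partial>M) = (\<Sum>k=1..Kn. Dk k)"
        unfolding Dk_def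
        by (rule Bochner_Integration.integral_sum) (use intf in auto)
      then show ?thesis by simp
    qed
    also have "\<dots> \<le> (1 / real Kn) * (3 * Ac * real Kn powr (1/3))"
      using sumD[of Kn] Kn by (intro mult_left_mono) auto
    also have "\<dots> = 3 * Ac * real Kn powr (-2/3)"
    proof -
      have "real Kn powr (-2/3) = real Kn powr (1/3 - 1)" by simp
      also have "\<dots> = real Kn powr (1/3) / real Kn powr 1" by (rule powr_diff)
      also have "\<dots> = real Kn powr (1/3) / real Kn" using Kn by simp
      finally show ?thesis by simp
    qed
    finally show ?thesis .
  qed
  have AEu: "AE \<omega> in M. \<forall>j. j \<ge> 1 \<longrightarrow> norm (u j \<omega>) \<le> 1"
  proof (subst AE_all_countable, intro allI)
    fix j :: nat
    show "AE \<omega> in M. j \<ge> 1 \<longrightarrow> norm (u j \<omega>) \<le> 1"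
    proof (cases "j \<ge> 1")
      case True
      have um: "u j \<in> M \<rightarrow>\<^sub>M borel" using u_rv True by auto
      have du: "distr M borel (u j) = uniform_sphere" using u_unif True by auto
      have "AE y in (uniform_sphere :: (real^'n) measure). norm y \<le> 1"
        using AE_sphere_norm by eventually_elim simp
      then have "AE y in distr M borel (u j). norm y \<le> 1" by (simp only: du)
      then have "AE \<omega> in M. norm (u j \<omega>) \<le> 1"
        by (subst (asm) AE_distr_iff[OF um]) auto
      then show ?thesis by auto
    qed simp
  qed
  have xeq: "AE \<omega> in M. \<forall>k. k \<ge> 1 \<longrightarrow> x k \<omega> = x' k \<omega>"
    using AEu
  proof eventually_elim
    case (elim \<omega>)
    show ?case
    proof (intro allI impI)
      fix k :: nat assume "k \<ge> 1"
      then show "x k \<omega> = x' k \<omega>"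
      proof (induction k rule: dec_induct)
        case base then show ?case using x_init x'1 by simp
      next
        case (step k)
        have ucb: "cB (u k \<omega>) = u k \<omega>" unfolding cB_def
          using elim step(1) by (intro closest_point_self) auto
        have "x' (Suc k) \<omega> = stepf K F tau delta k (x' k \<omega>) (u k \<omega>) (xi k \<omega>)" by (rule x'Suc[OF step(1)])
        also have "\<dots> = closest_point K (x' k \<omega> - (2 / (tau * real k)) *\<^sub>R
             ((real CARD('n) / (delta * real k powr (-1/6))) *
               (Im (F (cvec (x' k \<omega>) ((delta * real k powr (-1/6)) *\<^sub>R u k \<omega>))) + xi k \<omega>))
             *\<^sub>R u k \<omega>)"
          using ucb by (simp add: stepf_def cpK cB_def)
        also have "\<dots> = x (Suc k) \<omega>" using x_step step(1) step(3) by simp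
        finally show ?case by simp
      qed
    qed
  qed
  define S where "S = real CARD('n) ^ 2 / tau * delta powr (-1/3) * sigma"
  have S0: "S > 0" using tau_pos delta(1) sigma_pos by (simp add: S_def)
  show ?thesis
  proof (intro exI[of _ "3 * Ac / S"] exI[of _ "0::nat"] allI impI)
    fix Kn :: nat assume Kn: "Kn \<ge> 1"
    have rhs: "3 * Ac / S * (1 + ln (real Kn)) ^ 0 * (S * real Kn powr (-2/3)) = 3 * Ac * real Kn powr (-2/3)"
      using S0 by simp
    have "(\<integral>\<omega>. f ((1 / real Kn) *\<^sub>R (\<Sum>k=1..Kn. x k \<omega>)) - f xstar \<partial>M) \<le> 3 * Ac * real Kn powr (-2/3)"
    proof (cases "(\<lambda>\<omega>. f ((1 / real Kn) *\<^sub>R (\<Sum>k=1..Kn. x k \<omega>)) - f xstar) \<in> borel_measurable M")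
      case True
      have "(\<integral>\<omega>. f ((1 / real Kn) *\<^sub>R (\<Sum>k=1..Kn. x k \<omega>)) - f xstar \<partial>M)
          = (\<integral>\<omega>. f ((1 / real Kn) *\<^sub>R (\<Sum>k=1..Kn. x' k \<omega>)) - f xstar \<partial>M)"
      proof (rule integral_cong_AE[OF True])
        show "(\<lambda>\<omega>. f ((1 / real Kn) *\<^sub>R (\<Sum>k=1..Kn. x' k \<omega>)) - f xstar) \<in> borel_measurable M"
        proof -
          have avgm: "(\<lambda>\<omega>. (1 / real Kn) *\<^sub>R (\<Sum>k=1..Kn. x' k \<omega>)) \<in> borel_measurable M"
            using x'm by (intro borel_measurable_scaleR borel_measurable_const borel_measurable_sum) auto
          have "(\<lambda>\<omega>. f (closest_point K ((1 / real Kn) *\<^sub>R (\<Sum>k=1..Kn. x' k \<omega>)))) \<in> borel_measurable M"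
            using measurable_compose[OF avgm fKm] by simp
          then have "(\<lambda>\<omega>. f ((1 / real Kn) *\<^sub>R (\<Sum>k=1..Kn. x' k \<omega>))) \<in> borel_measurable M"
            by (simp only: closest_point_self[OF avgK[OF Kn]])
          then show ?thesis by measurable
        qed
        show "AE \<omega> in M. f ((1 / real Kn) *\<^sub>R (\<Sum>k=1..Kn. x k \<omega>)) - f xstar =
                         f ((1 / real Kn) *\<^sub>R (\<Sum>k=1..Kn. x' k \<omega>)) - f xstar"
          using xeq by eventually_elim (intro arg_cong[where f="\<lambda>v. f ((1 / real Kn) *\<^sub>R v) - f xstar"] sum.cong, auto)
      qed
      then show ?thesis using bound'[OF Kn] by simp
    next
      case False
      then have "\<not> integrable M (\<lambda>\<omega>. f ((1 / real Kn) *\<^sub>R (\<Sum>k=1..Kn. x k \<omega>)) - f xstar)"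
        using borel_measurable_integrable by blast
      then have "(\<integral>\<omega>. f ((1 / real Kn) *\<^sub>R (\<Sum>k=1..Kn. x k \<omega>)) - f xstar \<partial>M) = 0"
        by (rule not_integrable_integral_eq)
      moreover have "0 \<le> 3 * Ac * real Kn powr (-2/3)" using Ac_nn by simp
      ultimately show ?thesis by simp
    qed
    then show "(\<integral>\<omega>. f ((1 / real Kn) *\<^sub>R (\<Sum>k=1..Kn. x k \<omega>)) - f xstar \<partial>M)
       \<le> 3 * Ac / S * (1 + ln (real Kn)) ^ 0 *
          (real CARD('n) ^ 2 / tau * delta powr (-1/3) * sigma * real Kn powr (-2/3))"
      using rhs by (simp add: S_def)
  qed
qed


end
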